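(* Let $n\ge6$ be even and let $\mathbf X=\mathbf U+\mathbf E\in\mathbb R^{n\times p}$, where $\mathbf U_{1\cdot}=\dots=\mathbf U_{n/2\cdot}=\mathbf c_1$ and $\mathbf U_{n/2+1\cdot}=\dots=\mathbf U_{n\cdot}=\mathbf c_2$, and the rows of $\mathbf E$ are independent, mean zero, with sub-Gaussian norm $\sigma_p$. Construct the symmetric matrix $\boldsymbol\Phi\in\{0,1\}^{n\times n}$ with zero diagonal by setting $\Phi_{ij}=1$ for $i\ne j$ whenever $\mathbf U_{i\cdot}=\mathbf U_{j\cdot}$, and additionally $\Phi_{i,i+n/2}=\Phi_{i+n/2,i}=1$ for $k$ distinct values of $i\in\{1,\dots,n/2\}$, where $1\le k\le n/2$; all other entries are $0$. Let $G=(V,\mathcal E)$ be the corresponding graph with oriented edge-incidence matrix $\mathbf F$. Then $$\frac{\|\mathbf F^\dagger\mathbf E\|_{\max}}{n\sqrt p}\sum_{(i,j)\in\mathcal E}\sqrt{\Phi_{ij}}\,\|\mathbf U_{i\cdot}-\mathbf U_{j\cdot}\|_2\le\sigma_p\sqrt{\frac{\log(np)}{p}}\Big(\sqrt{\frac2n}+\frac{8k}{n^2}\Big)\|\mathbf c_1-\mathbf c_2\|_2$$ with probability at least $1-\frac{2}{np}$.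
   Context: The sub-Gaussian norm of a random vector $\mathbf Y\in\mathbb R^p$ is $\sup_{\|\mathbf v\|_2=1}\inf\{K>0:\mathbb E[\exp((\mathbf v^\top\mathbf Y)^2/K^2)]\le2\}$. Edges $(i,j)\in\mathcal E$ are indexed with $i<j$. An oriented edge-incidence matrix $\mathbf F\in\mathbb R^{n\times|\mathcal E|}$ has, for each edge $(j,k)$ with column index $\mathcal E(j,k)$, entries $\mathbf F_{j,\mathcal E(j,k)}=-\mathbf F_{k,\mathcal E(j,k)}=\sqrt{\Phi_{jk}}$ and zeros elsewhere. $\mathbf F^\dagger$ is the Moore–Penrose pseudoinverse and $\|\cdot\|_{\max}$ the maximum absolute entry. *)

theory Defs
  imports "HOL-Probability.Probability" "Jordan_Normal_Form.Matrix"
begin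

text \<open>Vectors in R^p are represented as functions nat => real, only coordinates l < p matter.\<close>

definition vnorm :: "nat \<Rightarrow> (nat \<Rightarrow> real) \<Rightarrow> real" where
  "vnorm p v = sqrt (\<Sum>l<p. (v l)\<^sup>2)"

text \<open>Sub-Gaussian norm of a random vector Y in R^p (ereal; infinity if not sub-Gaussian):
  sup over unit v of inf {K>0. E exp((v^T Y)^2/K^2) <= 2}.\<close>

definition subgaussian_norm :: "'a measure \<Rightarrow> nat \<Rightarrow> ('a \<Rightarrow> nat \<Rightarrow> real) \<Rightarrow> ereal" where
  "subgaussian_norm M p Y =
     (SUP v \<in> {v :: nat \<Rightarrow> real. (\<Sum>l<p. (v l)\<^sup>2) = 1}.
        INF K \<in> {K :: real. K > 0 \<and>
            (\<integral>\<^sup>+ \<omega>. ennreal (exp ((\<Sum>l<p. v l * Y \<omega> l)\<^sup>2 / K\<^sup>2)) \<partial>M) \<le> 2}. ereal K)"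

definition pseudo_inverse :: "real mat \<Rightarrow> real mat" where
  "pseudo_inverse A = (THE B. B \<in> carrier_mat (dim_col A) (dim_row A) \<and>
      A * B * A = A \<and> B * A * B = B \<and>
      transpose_mat (A * B) = A * B \<and> transpose_mat (B * A) = B * A)"

definition max_norm :: "real mat \<Rightarrow> real" where
  "max_norm A = Max ({\<bar>A $$ (i, j)\<bar> | i j. i < dim_row A \<and> j < dim_col A} \<union> {0})"

definition edge_set :: "nat \<Rightarrow> (nat \<Rightarrow> nat \<Rightarrow> real) \<Rightarrow> (nat \<times> nat) set" where
  "edge_set n \<Phi> = {(i, j). i < j \<and> j < n \<and> \<Phi> i j \<noteq> 0}"

definition edge_list :: "nat \<Rightarrow> (nat \<Rightarrow> nat \<Rightarrow> real) \<Rightarrow> (nat \<times> nat) list" where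
  "edge_list n \<Phi> = [(i, j). i \<leftarrow> [0..<n], j \<leftarrow> [0..<n], i < j \<and> \<Phi> i j \<noteq> 0]"

definition incidence_mat :: "nat \<Rightarrow> (nat \<Rightarrow> nat \<Rightarrow> real) \<Rightarrow> real mat" where
  "incidence_mat n \<Phi> =
     (let es = edge_list n \<Phi> in
      mat n (length es) (\<lambda>(r, c). (case es ! c of (j, k) \<Rightarrow>
         if r = j then sqrt (\<Phi> j k) else if r = k then - sqrt (\<Phi> j k) else 0)))"

end

theory Submission
  imports Defs
begin

lemma pinv_unique:
  fixes A B C :: "real mat"
  assumes A: "A \<in> carrier_mat nr nc" and B: "B \<in> carrier_mat nc nr" and C: "C \<in> carrier_mat nc nr"
    and b1: "A*B*A = A" and b2: "B*A*B = B" and b3: "transpose_mat (A*B) = A*B" and b4: "transpose_mat (B*A) = B*A"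
    and c1: "A*C*A = A" and c2: "C*A*C = C" and c3: "transpose_mat (A*C) = A*C" and c4: "transpose_mat (C*A) = C*A"
  shows "B = C"
proof -
  have tA: "transpose_mat A = transpose_mat A * (A*C)"
  proof -
    have "transpose_mat A = transpose_mat ((A*C)*A)" using c1 by simp
    also have "\<dots> = transpose_mat A * transpose_mat (A*C)"
      by (rule transpose_mult[OF mult_carrier_mat[OF A C] A])
    finally show ?thesis using c3 by simp
  qed
  have AB: "A*B = A*C"
  proof -
    have "A*B = transpose_mat (A*B)" using b3 by simp
    also have "\<dots> = transpose_mat B * transpose_mat A" by (rule transpose_mult[OF A B])
    also have "\<dots> = transpose_mat B * (transpose_mat A * (A*C))" using tA by simp
    also have "\<dots> = (transpose_mat B * transpose_mat A) * (A*C)"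
      using A B C assoc_mult_mat[of "transpose_mat B" nr nc "transpose_mat A" nr "A*C" nr] by simp
    also have "transpose_mat B * transpose_mat A = A*B"
      using transpose_mult[OF A B] b3 by simp
    also have "(A*B)*(A*C) = (A*B*A)*C"
      by (subst assoc_mult_mat[of "A*B" nr nr A nc C nr]) (use A B C in auto)
    finally show ?thesis using b1 by simp
  qed
  have tA2: "transpose_mat A = (C*A) * transpose_mat A"
  proof -
    have "transpose_mat A = transpose_mat (A*(C*A))" using c1 A C by simp
    also have "\<dots> = transpose_mat (C*A) * transpose_mat A"
      by (rule transpose_mult[OF A mult_carrier_mat[OF C A]])
    finally show ?thesis using c4 by simp
  qed
  have BA: "B*A = C*A"
  proof -
    have "B*A = transpose_mat (B*A)" using b4 by simp
    also have "\<dots> = transpose_mat A * transpose_mat B" by (rule transpose_mult[OF B A])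
    also have "\<dots> = ((C*A) * transpose_mat A) * transpose_mat B" using tA2 by simp
    also have "\<dots> = (C*A) * (transpose_mat A * transpose_mat B)"
      by (rule assoc_mult_mat[of "C*A" nc nc "transpose_mat A" nr "transpose_mat B" nc]) (use A B C in auto)
    also have "transpose_mat A * transpose_mat B = B*A"
      using transpose_mult[OF B A] b4 by simp
    also have "(C*A)*(B*A) = C*(A*B*A)"
    proof -
      have "(C*A)*(B*A) = C*(A*(B*A))"
        by (rule assoc_mult_mat[of C nc nr A nc "B*A" nc]) (use A B C in auto)
      also have "A*(B*A) = A*B*A" using A B by simp
      finally show ?thesis .
    qed
    finally show ?thesis using b1 by simp
  qed
  have "B = B*(A*B)" using b2 A B by simp
  also have "\<dots> = B*(A*C)" using AB by simp
  also have "\<dots> = (B*A)*C" using A B C by simp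
  also have "\<dots> = (C*A)*C" using BA by simp
  also have "\<dots> = C" using c2 by simp
  finally show ?thesis .
qed

lemma pinv_eqI:
  fixes A B :: "real mat"
  assumes A: "A \<in> carrier_mat nr nc" and B: "B \<in> carrier_mat nc nr"
    and b1: "A*B*A = A" and b2: "B*A*B = B" and b3: "transpose_mat (A*B) = A*B" and b4: "transpose_mat (B*A) = B*A"
  shows "pseudo_inverse A = B"
  unfolding pseudo_inverse_def
proof (rule the_equality)
  show "B \<in> carrier_mat (dim_col A) (dim_row A) \<and> A * B * A = A \<and> B * A * B = B \<and>
    transpose_mat (A * B) = A * B \<and> transpose_mat (B * A) = B * A"
    using assms by auto
next
  fix C assume "C \<in> carrier_mat (dim_col A) (dim_row A) \<and> A * C * A = A \<and> C * A * C = C \<and>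
    transpose_mat (A * C) = A * C \<and> transpose_mat (C * A) = C * A"
  then show "C = B" using pinv_unique[OF A B, of C] assms by auto
qed

lemma set_edge_list: "set (edge_list n \<Phi>) = edge_set n \<Phi>"
  by (auto simp: edge_list_def edge_set_def)

lemma filter_map_Pair_aux:
  "concat (map (\<lambda>j. if P x j then [(x, j)] else []) ys) = filter (\<lambda>(i,j). P i j) (map (Pair x) ys)"
  by (induction ys) auto

lemma edge_list_product:
  "edge_list n \<Phi> = filter (\<lambda>(i,j). i < j \<and> \<Phi> i j \<noteq> 0) (List.product [0..<n] [0..<n])"
  unfolding edge_list_def product_concat_map filter_concat map_map comp_def
  using filter_map_Pair_aux[where P="\<lambda>i j. i < j \<and> \<Phi> i j \<noteq> 0"]
  by simp

lemma distinct_edge_list: "distinct (edge_list n \<Phi>)"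
  unfolding edge_list_product by (simp add: distinct_product)

lemma sum_edge_list:
  fixes g :: "nat \<times> nat \<Rightarrow> real"
  shows "(\<Sum>c\<in>{0..<length (edge_list n \<Phi>)}. g (edge_list n \<Phi> ! c)) = (\<Sum>e\<in>edge_set n \<Phi>. g e)"
proof -
  have "(\<Sum>c\<in>{0..<length (edge_list n \<Phi>)}. g (edge_list n \<Phi> ! c)) = sum_list (map g (edge_list n \<Phi>))"
    by (simp add: sum_list_sum_nth)
  also have "\<dots> = (\<Sum>e\<in>set (edge_list n \<Phi>). g e)"
    by (rule sum_list_distinct_conv_sum_set[OF distinct_edge_list])
  finally show ?thesis by (simp add: set_edge_list)
qed

lemma sum_edge_set:
  fixes g :: "nat \<times> nat \<Rightarrow> real"
  shows "(\<Sum>e\<in>edge_set n \<Phi>. g e) = (\<Sum>a<n. \<Sum>b<n. if a < b \<and> \<Phi> a b \<noteq> 0 then g (a,b) else 0)"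
proof -
  have sub: "edge_set n \<Phi> \<subseteq> {..<n} \<times> {..<n}" by (auto simp: edge_set_def)
  have "(\<Sum>e\<in>edge_set n \<Phi>. g e) = (\<Sum>e\<in>{..<n} \<times> {..<n}. if e \<in> edge_set n \<Phi> then g e else 0)"
    using sub by (simp add: sum.If_cases Int_absorb1)
  also have "\<dots> = (\<Sum>a<n. \<Sum>b<n. if (a,b) \<in> edge_set n \<Phi> then g (a,b) else 0)"
    by (simp add: sum.cartesian_product)
  also have "\<dots> = (\<Sum>a<n. \<Sum>b<n. if a < b \<and> \<Phi> a b \<noteq> 0 then g (a,b) else 0)"
    by (intro sum.cong refl) (auto simp: edge_set_def)
  finally show ?thesis .
qed

lemma edge_list_nth:
  assumes "c < length (edge_list n \<Phi>)"
  shows "fst (edge_list n \<Phi> ! c) < snd (edge_list n \<Phi> ! c)" "snd (edge_list n \<Phi> ! c) < n"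
    "\<Phi> (fst (edge_list n \<Phi> ! c)) (snd (edge_list n \<Phi> ! c)) \<noteq> 0"
proof -
  have "edge_list n \<Phi> ! c \<in> edge_set n \<Phi>" using assms nth_mem set_edge_list by metis
  then show "fst (edge_list n \<Phi> ! c) < snd (edge_list n \<Phi> ! c)" "snd (edge_list n \<Phi> ! c) < n"
    "\<Phi> (fst (edge_list n \<Phi> ! c)) (snd (edge_list n \<Phi> ! c)) \<noteq> 0"
    by (auto simp: edge_set_def)
qed

definition Rmat :: "nat \<Rightarrow> (nat \<Rightarrow> nat \<Rightarrow> real) \<Rightarrow> (nat \<Rightarrow> nat \<Rightarrow> real) \<Rightarrow> real mat" where
  "Rmat n \<Phi> P = mat (length (edge_list n \<Phi>)) n
     (\<lambda>(c,i). P (fst (edge_list n \<Phi> ! c)) i - P (snd (edge_list n \<Phi> ! c)) i)"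

lemma F_carrier: "incidence_mat n \<Phi> \<in> carrier_mat n (length (edge_list n \<Phi>))"
  by (simp add: incidence_mat_def Let_def)

lemma R_carrier: "Rmat n \<Phi> P \<in> carrier_mat (length (edge_list n \<Phi>)) n"
  by (simp add: Rmat_def)

lemma F_entry:
  assumes H01: "\<forall>i<n. \<forall>j<n. \<Phi> i j = 0 \<or> \<Phi> i j = 1"
    and r: "r < n" and c: "c < length (edge_list n \<Phi>)"
  shows "incidence_mat n \<Phi> $$ (r,c) =
     (if r = fst (edge_list n \<Phi> ! c) then 1 else if r = snd (edge_list n \<Phi> ! c) then -1 else 0)"
proof -
  obtain a b where ab: "edge_list n \<Phi> ! c = (a,b)" by (cases "edge_list n \<Phi> ! c") auto
  have "a < b" "b < n" "\<Phi> a b \<noteq> 0" using edge_list_nth[OF c] ab by auto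
  have "a < n" using \<open>a < b\<close> \<open>b < n\<close> by simp
  have "\<Phi> a b = 1" using H01 \<open>a < n\<close> \<open>b < n\<close> \<open>\<Phi> a b \<noteq> 0\<close> by blast
  then show ?thesis using r c ab by (simp add: incidence_mat_def Let_def)
qed

lemma R_entry:
  assumes "c < length (edge_list n \<Phi>)" "i < n"
  shows "Rmat n \<Phi> P $$ (c,i) = P (fst (edge_list n \<Phi> ! c)) i - P (snd (edge_list n \<Phi> ! c)) i"
  using assms by (simp add: Rmat_def)

lemma FR_entry:
  assumes H01: "\<forall>i<n. \<forall>j<n. \<Phi> i j = 0 \<or> \<Phi> i j = 1"
    and sym: "\<forall>i<n. \<forall>j<n. \<Phi> i j = \<Phi> j i"
    and i: "i < n" and j: "j < n"
  shows "(incidence_mat n \<Phi> * Rmat n \<Phi> P) $$ (i,j) = (\<Sum>t<n. \<Phi> i t * (P i j - P t j))"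
proof -
  let ?es = "edge_list n \<Phi>"
  define h where "h a b = P a j - P b j" for a b
  define g where "g e = (if i = fst e then 1 else if i = snd e then -1 else 0) * h (fst e) (snd e)" for e
  have "(incidence_mat n \<Phi> * Rmat n \<Phi> P) $$ (i,j) =
      (\<Sum>c\<in>{0..<length ?es}. incidence_mat n \<Phi> $$ (i,c) * Rmat n \<Phi> P $$ (c,j))"
    using F_carrier[of n \<Phi>] R_carrier[of n \<Phi> P] i j by (simp add: scalar_prod_def)
  also have "\<dots> = (\<Sum>c\<in>{0..<length ?es}. g (?es ! c))"
    by (intro sum.cong refl) (simp add: F_entry[OF H01 i] R_entry j g_def h_def)
  also have "\<dots> = (\<Sum>e\<in>edge_set n \<Phi>. g e)" by (rule sum_edge_list)
  also have "\<dots> = (\<Sum>a<n. \<Sum>b<n. if a < b \<and> \<Phi> a b \<noteq> 0 then g (a,b) else 0)" by (rule sum_edge_set)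
  also have "\<dots> = (\<Sum>a<n. \<Sum>b<n. (if a = i then (if i < b \<and> \<Phi> i b \<noteq> 0 then h i b else 0) else 0)
                       - (if b = i then (if a < i \<and> \<Phi> a i \<noteq> 0 then h a i else 0) else 0))"
    by (intro sum.cong refl) (auto simp: g_def)
  also have "\<dots> = (\<Sum>b<n. (if i < b \<and> \<Phi> i b \<noteq> 0 then h i b else 0))
                 - (\<Sum>a<n. (if a < i \<and> \<Phi> a i \<noteq> 0 then h a i else 0))"
  proof -
    have 1: "(\<Sum>a<n. \<Sum>b<n. (if a = i then (if i < b \<and> \<Phi> i b \<noteq> 0 then h i b else 0) else 0))
        = (\<Sum>b<n. (if i < b \<and> \<Phi> i b \<noteq> 0 then h i b else 0))"
    proof -
      have "(\<Sum>b<n. (if a = i then (if i < b \<and> \<Phi> i b \<noteq> 0 then h i b else 0) else 0))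
          = (if a = i then (\<Sum>b<n. (if i < b \<and> \<Phi> i b \<noteq> 0 then h i b else 0)) else 0)" for a
        by simp
      then show ?thesis using i by simp
    qed
    have 2: "(\<Sum>a<n. \<Sum>b<n. (if b = i then (if a < i \<and> \<Phi> a i \<noteq> 0 then h a i else 0) else 0))
        = (\<Sum>a<n. (if a < i \<and> \<Phi> a i \<noteq> 0 then h a i else 0))"
      using i by (intro sum.cong refl) (simp add: sum.delta)
    show ?thesis using 1 2 by (simp add: sum_subtractf)
  qed
  also have "\<dots> = (\<Sum>t<n. (if i < t \<and> \<Phi> i t \<noteq> 0 then h i t else 0) - (if t < i \<and> \<Phi> t i \<noteq> 0 then h t i else 0))"
    by (simp add: sum_subtractf)
  also have "\<dots> = (\<Sum>t<n. \<Phi> i t * (P i j - P t j))"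
  proof (intro sum.cong refl)
    fix t assume t: "t \<in> {..<n}"
    then have "\<Phi> i t = \<Phi> t i" "\<Phi> i t = 0 \<or> \<Phi> i t = 1" using sym H01 i by auto
    then show "(if i < t \<and> \<Phi> i t \<noteq> 0 then h i t else 0) - (if t < i \<and> \<Phi> t i \<noteq> 0 then h t i else 0) =
       \<Phi> i t * (P i j - P t j)"
      by (cases "i < t"; cases "t < i"; auto simp: h_def)
  qed
  finally show ?thesis .
qed

lemma incidence_pinv:
  fixes P :: "nat \<Rightarrow> nat \<Rightarrow> real"
  assumes H01: "\<forall>i<n. \<forall>j<n. \<Phi> i j = 0 \<or> \<Phi> i j = 1"
    and sym: "\<forall>i<n. \<forall>j<n. \<Phi> i j = \<Phi> j i"
    and Psym: "\<forall>i<n. \<forall>j<n. P i j = P j i"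
    and Prow: "\<forall>i<n. (\<Sum>j<n. P i j) = 0"
    and LP: "\<forall>i<n. \<forall>j<n. (\<Sum>t<n. \<Phi> i t * (P i j - P t j)) = (if i = j then 1 else 0) - 1 / real n"
  shows "pseudo_inverse (incidence_mat n \<Phi>) = Rmat n \<Phi> P"
proof -
  let ?es = "edge_list n \<Phi>"
  let ?L = "length ?es"
  define F where "F = incidence_mat n \<Phi>"
  define R where "R = Rmat n \<Phi> P"
  define Pi where "Pi = mat n n (\<lambda>(i,j). (if i = j then 1 else 0) - 1 / real n)"
  have F: "F \<in> carrier_mat n ?L" unfolding F_def by (rule F_carrier)
  have R: "R \<in> carrier_mat ?L n" unfolding R_def by (rule R_carrier)
  have Pi: "Pi \<in> carrier_mat n n" unfolding Pi_def by simp
  have Fe: "F $$ (r,c) = (if r = fst (?es ! c) then 1 else if r = snd (?es ! c) then -1 else 0)"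
    if "r < n" "c < ?L" for r c using F_entry[OF H01 that] by (simp add: F_def)
  have Re: "R $$ (c,i) = P (fst (?es ! c)) i - P (snd (?es ! c)) i" if "c < ?L" "i < n" for c i
    using R_entry[OF that] by (simp add: R_def)
  have en: "fst (?es ! c) < snd (?es ! c)" "snd (?es ! c) < n" "fst (?es ! c) < n" if "c < ?L" for c
    using edge_list_nth[OF that] by auto
  have FR: "F * R = Pi"
  proof (rule eq_matI)
    fix i j assume "i < dim_row Pi" "j < dim_col Pi"
    then have ij: "i < n" "j < n" by (auto simp: Pi_def)
    show "(F * R) $$ (i, j) = Pi $$ (i, j)"
      using FR_entry[OF H01 sym ij, of P] LP ij by (simp add: F_def R_def Pi_def)
  qed (use F R Pi in auto)
  have colF: "(\<Sum>j<n. F $$ (j,c) * x j) = x (fst (?es ! c)) - x (snd (?es ! c))" if c: "c < ?L" for c x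
  proof -
    have "(\<Sum>j<n. F $$ (j,c) * x j) = (\<Sum>j<n. (if j = fst (?es ! c) then x j else 0) - (if j = snd (?es ! c) then x j else 0))"
      using en[OF c] by (intro sum.cong refl) (auto simp: Fe c)
    also have "\<dots> = x (fst (?es ! c)) - x (snd (?es ! c))"
      using en[OF c] by (simp add: sum_subtractf)
    finally show ?thesis .
  qed
  have RF: "(R * F) $$ (c,c') = P (fst (?es ! c)) (fst (?es ! c')) - P (snd (?es ! c)) (fst (?es ! c'))
       - (P (fst (?es ! c)) (snd (?es ! c')) - P (snd (?es ! c)) (snd (?es ! c')))"
    if c: "c < ?L" and c': "c' < ?L" for c c'
  proof -
    have "(R * F) $$ (c,c') = (\<Sum>j\<in>{0..<n}. R $$ (c,j) * F $$ (j,c'))"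
      using R F c c' by (simp add: scalar_prod_def)
    also have "\<dots> = (\<Sum>j<n. F $$ (j,c') * R $$ (c,j))" by (simp add: atLeast0LessThan mult.commute)
    also have "\<dots> = R $$ (c, fst (?es ! c')) - R $$ (c, snd (?es ! c'))" by (rule colF[OF c'])
    finally show ?thesis using Re c en[OF c'] by simp
  qed
  have b1: "F * R * F = F"
  proof -
    have "F * R * F = Pi * F" using FR by simp
    also have "\<dots> = F"
    proof (rule eq_matI)
      fix i c assume "i < dim_row F" "c < dim_col F"
      then have ic: "i < n" "c < ?L" using F by auto
      have "(Pi * F) $$ (i,c) = (\<Sum>j\<in>{0..<n}. Pi $$ (i,j) * F $$ (j,c))"
        using Pi F ic by (simp add: scalar_prod_def)
      also have "\<dots> = (\<Sum>j<n. F $$ (j,c) * ((if i = j then 1 else 0) - 1 / real n))"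
        by (intro sum.cong) (auto simp: Pi_def ic mult.commute)
      also have "\<dots> = (\<Sum>j<n. (if j = i then F $$ (j,c) else 0) - F $$ (j,c) * 1 / real n)"
        by (intro sum.cong refl) (auto simp: algebra_simps)
      also have "\<dots> = (\<Sum>j<n. (if j = i then F $$ (j,c) else 0)) - (\<Sum>j<n. F $$ (j,c) * 1) / real n"
        by (simp only: sum_subtractf sum_divide_distrib)
      also have "(\<Sum>j<n. F $$ (j,c) * 1) = 0" using colF[OF ic(2), of "\<lambda>_. 1"] by simp
      finally show "(Pi * F) $$ (i,c) = F $$ (i,c)" using ic by simp
    qed (use Pi F in auto)
    finally show ?thesis .
  qed
  have b2: "R * F * R = R"
  proof -
    have "R * F * R = R * (F * R)" using R F by simp
    also have "\<dots> = R * Pi" using FR by simp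
    also have "\<dots> = R"
    proof (rule eq_matI)
      fix c i assume "c < dim_row R" "i < dim_col R"
      then have ci: "c < ?L" "i < n" using R by auto
      have "(R * Pi) $$ (c,i) = (\<Sum>j\<in>{0..<n}. R $$ (c,j) * Pi $$ (j,i))"
        using Pi R ci by (simp add: scalar_prod_def)
      also have "\<dots> = (\<Sum>j<n. R $$ (c,j) * ((if j = i then 1 else 0) - 1 / real n))"
        by (intro sum.cong) (auto simp: Pi_def ci)
      also have "\<dots> = (\<Sum>j<n. (if j = i then R $$ (c,j) else 0) - R $$ (c,j) / real n)"
        by (intro sum.cong refl) (auto simp: algebra_simps)
      also have "\<dots> = (\<Sum>j<n. (if j = i then R $$ (c,j) else 0)) - (\<Sum>j<n. R $$ (c,j)) / real n"
        by (simp only: sum_subtractf sum_divide_distrib)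
      also have "(\<Sum>j<n. R $$ (c,j)) = (\<Sum>j<n. P (fst (?es ! c)) j) - (\<Sum>j<n. P (snd (?es ! c)) j)"
        using ci by (simp add: Re sum_subtractf)
      also have "\<dots> = 0" using Prow en[OF ci(1)] by simp
      finally show "(R * Pi) $$ (c,i) = R $$ (c,i)" using ci by simp
    qed (use Pi R in auto)
    finally show ?thesis .
  qed
  have b3: "transpose_mat (F * R) = F * R"
    unfolding FR by (rule eq_matI) (auto simp: Pi_def)
  have b4: "transpose_mat (R * F) = R * F"
  proof (rule eq_matI)
    fix c c' assume "c < dim_row (R * F)" "c' < dim_col (R * F)"
    then have cc: "c < ?L" "c' < ?L" using R F by auto
    show "transpose_mat (R * F) $$ (c, c') = (R * F) $$ (c, c')"
      using cc R F RF[OF cc] RF[OF cc(2) cc(1)] Psym en[OF cc(1)] en[OF cc(2)] by auto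
  qed (use R F in auto)
  show ?thesis
    using pinv_eqI[OF F R b1 b2 b3 b4] by (simp add: F_def R_def)
qed

locale twoclust =
  fixes m k :: nat and S :: "nat set"
  assumes S_sub: "S \<subseteq> {..<m}" and S_card: "card S = k" and k1: "1 \<le> k" and km: "k \<le> m" and m3: "3 \<le> m"
begin

definition gg :: "nat \<Rightarrow> real" where "gg q = (if q \<in> S then real m + 2 else real m)"
definition uu :: "nat \<Rightarrow> real" where "uu q = 1 / gg q"
definition gam :: real where "gam = 2 * real k / (real m * (real m + 2))"
definition Ai :: "nat \<Rightarrow> nat \<Rightarrow> real" where "Ai q r = (if q = r then uu q else 0) + uu q * uu r / gam"
definition Kf :: "nat \<Rightarrow> nat \<Rightarrow> real" where "Kf q r = ((if q = r then 1 else 0) - 1 / real m) / real m"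
definition pos :: "nat \<Rightarrow> nat" where "pos i = (if i < m then i else i - m)"
definition sg :: "nat \<Rightarrow> real" where "sg i = (if i < m then 1 else -1)"
definition PP :: "nat \<Rightarrow> nat \<Rightarrow> real" where "PP i j = (Kf (pos i) (pos j) + sg i * sg j * Ai (pos i) (pos j)) / 2"
definition Phi0 :: "nat \<Rightarrow> nat \<Rightarrow> real" where
  "Phi0 i j = (if (i \<noteq> j \<and> (i < m) = (j < m)) \<or> (i \<in> S \<and> j = i + m) \<or> (j \<in> S \<and> i = j + m) then 1 else 0)"

lemma m_pos: "real m > 0" using m3 by simp
lemma gam_pos: "gam > 0" using k1 m3 by (simp add: gam_def)
lemma gg_pos: "gg q > 0" using m3 by (simp add: gg_def)

lemma finS: "finite S" using S_sub finite_subset by blast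

lemma sum_S: "(\<Sum>q<m. if q \<in> S then x else y) = real k * x + (real m - real k) * y"
proof -
  have e1: "{..<m} \<inter> S = S" using S_sub by auto
  have e2: "{..<m} \<inter> - S = {..<m} - S" by auto
  have c2: "card ({..<m} - S) = m - k" using S_sub S_card finS by (simp add: card_Diff_subset)
  have "(\<Sum>q<m. if q \<in> S then x else y) = (\<Sum>q\<in>{..<m} \<inter> S. x) + (\<Sum>q\<in>{..<m} \<inter> - S. y)"
    by (simp add: sum.If_cases)
  also have "\<dots> = real k * x + real (m - k) * y" unfolding e1 e2 using c2 S_card by simp
  finally show ?thesis using km by (simp add: of_nat_diff)
qed

lemma sum_uu: "(\<Sum>q<m. uu q) = 1 - gam"
proof -
  have "(\<Sum>q<m. uu q) = (\<Sum>q<m. if q \<in> S then 1 / (real m + 2) else 1 / real m)"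
    by (intro sum.cong refl) (simp add: uu_def gg_def)
  also have "\<dots> = real k / (real m + 2) + (real m - real k) / real m" by (simp add: sum_S)
  also have "\<dots> = 1 - gam"
  proof -
    have "real m \<noteq> 0" "real m + 2 \<noteq> 0" using m_pos by auto
    moreover have "real m * real m + real m * 2 > 0" by (intro add_pos_pos mult_pos_pos) (use m_pos in auto)
    then have "real m * real m + real m * 2 \<noteq> 0" by simp
    ultimately show ?thesis by (simp add: gam_def field_simps add_divide_distrib[symmetric])
  qed
  finally show ?thesis .
qed

lemma sum_Kf: "r < m \<Longrightarrow> (\<Sum>q<m. Kf q r) = 0"
proof -
  assume r: "r < m"
  have "(\<Sum>q<m. Kf q r) = (\<Sum>q<m. (if q = r then 1 / real m else 0) - 1 / (real m * real m))"
    by (intro sum.cong refl) (simp add: Kf_def field_simps)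
  also have "\<dots> = 1 / real m - real m / (real m * real m)" using r by (simp add: sum_subtractf)
  also have "\<dots> = 0" using m_pos by simp
  finally show ?thesis .
qed

lemma Kf_sym: "Kf q r = Kf r q" unfolding Kf_def by auto
lemma Ai_sym: "Ai q r = Ai r q" unfolding Ai_def by auto

lemma sum_Kf2: "r < m \<Longrightarrow> (\<Sum>q<m. Kf r q) = 0"
  using sum_Kf[of r] by (simp add: Kf_sym)

lemma sum_Ai: "r < m \<Longrightarrow> (\<Sum>q<m. Ai q r) = uu r / gam"
proof -
  assume r: "r < m"
  have "(\<Sum>q<m. Ai q r) = (\<Sum>q<m. if q = r then uu q else 0) + (\<Sum>q<m. uu q) * uu r / gam"
    by (simp add: Ai_def sum.distrib sum_distrib_right sum_divide_distrib)
  also have "\<dots> = uu r + (1 - gam) * uu r / gam" using r by (simp add: sum_uu)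
  also have "\<dots> = uu r / gam" using gam_pos by (simp add: field_simps)
  finally show ?thesis .
qed

lemma gg_Ai: "gg q * Ai q r = (if q = r then 1 else 0) + uu r / gam"
  using gg_pos[of q] gg_pos[of r] by (simp add: Ai_def uu_def field_simps)

lemma sum_split: "(\<Sum>t<2*m. f t) = (\<Sum>q<m. f q) + (\<Sum>q<m. f (q + m))"
proof -
  have "(\<Sum>t<2*m. f t) = (\<Sum>t<m. f t) + (\<Sum>t = m..<m + m. f t)"
    by (metis lessThan_atLeast0 mult_2 sum.atLeastLessThan_concat le_add1 zero_le)
  also have "(\<Sum>t = m..<m + m. f t) = (\<Sum>q<m. f (q + m))"
    by (simp add: sum.shift_bounds_nat_ivl[of f 0 m m, simplified] lessThan_atLeast0 add.commute)
  finally show ?thesis .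
qed

lemma pos_lt: "i < 2*m \<Longrightarrow> pos i < m" unfolding pos_def by auto

lemma PP_sym: "PP i j = PP j i"
  unfolding PP_def using Kf_sym Ai_sym by (simp add: mult.commute)

lemma PP_row: "i < 2*m \<Longrightarrow> (\<Sum>j<2*m. PP i j) = 0"
proof -
  assume i: "i < 2*m"
  have "(\<Sum>j<2*m. PP i j) = (\<Sum>q<m. PP i q) + (\<Sum>q<m. PP i (q+m))" by (rule sum_split)
  also have "\<dots> = (\<Sum>q<m. (PP i q + PP i (q+m)))" by (simp add: sum.distrib)
  also have "\<dots> = (\<Sum>q<m. Kf (pos i) q)"
    by (intro sum.cong refl) (simp add: PP_def pos_def sg_def field_simps)
  also have "\<dots> = 0" using pos_lt[OF i] by (rule sum_Kf2)
  finally show ?thesis .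
qed

end

context twoclust begin

definition off :: "nat \<Rightarrow> nat" where "off i = (if i < m then 0 else m)"
definition partner :: "nat \<Rightarrow> nat" where "partner i = (if i < m then i + m else i - m)"

lemma pos_off: "q < m \<Longrightarrow> pos (q + off i) = q" by (auto simp: pos_def off_def)
lemma sg_off: "q < m \<Longrightarrow> sg (q + off i) = sg i" by (auto simp: sg_def off_def)
lemma pos_partner: "i < 2*m \<Longrightarrow> pos (partner i) = pos i" by (auto simp: pos_def partner_def)
lemma sg_partner: "i < 2*m \<Longrightarrow> sg (partner i) = - sg i" by (auto simp: sg_def partner_def)
lemma partner_lt: "i < 2*m \<Longrightarrow> partner i < 2*m" by (auto simp: partner_def)

lemma Phi0_decomp:
  assumes "i < 2*m" "t < 2*m"
  shows "Phi0 i t = (if (t < m) = (i < m) then 1 else 0) - (if t = i then 1 else 0)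
                    + (if pos i \<in> S \<and> t = partner i then 1 else 0)"
  using assms S_sub by (auto simp: Phi0_def pos_def partner_def)

lemma sum_half:
  assumes i: "i < 2*m"
  shows "(\<Sum>t<2*m. (if (t < m) = (i < m) then f t else 0)) = (\<Sum>q<m. f (q + off i))"
  by (subst sum_split) (auto simp: off_def)

lemma sum_PP_half:
  assumes j: "j < 2*m"
  shows "(\<Sum>q<m. PP (q + off i) j) = sg i * sg j * uu (pos j) / gam / 2"
proof -
  have "(\<Sum>q<m. PP (q + off i) j) = (\<Sum>q<m. Kf q (pos j) / 2 + sg i * sg j / 2 * Ai q (pos j))"
    by (intro sum.cong refl) (simp add: PP_def pos_off sg_off field_simps)
  also have "\<dots> = (\<Sum>q<m. Kf q (pos j)) / 2 + sg i * sg j / 2 * (\<Sum>q<m. Ai q (pos j))"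
    by (simp add: sum.distrib sum_distrib_left sum_divide_distrib)
  also have "\<dots> = sg i * sg j * uu (pos j) / gam / 2"
    using pos_lt[OF j] by (simp add: sum_Kf sum_Ai)
  finally show ?thesis .
qed

lemma indS: "(if q \<in> S then 1 else 0) = (gg q - real m) / 2"
  by (simp add: gg_def)

lemma LP:
  assumes i: "i < 2*m" and j: "j < 2*m"
  shows "(\<Sum>t<2*m. Phi0 i t * (PP i j - PP t j)) = (if i = j then 1 else 0) - 1 / real (2*m)"
proof -
  define D where "D t = PP i j - PP t j" for t
  have "(\<Sum>t<2*m. Phi0 i t * D t) =
      (\<Sum>t<2*m. (if (t < m) = (i < m) then D t else 0) - (if t = i then D t else 0)
                + (if t = partner i then (if pos i \<in> S then D t else 0) else 0))"
    by (intro sum.cong refl) (auto simp: Phi0_decomp i)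
  also have "\<dots> = (\<Sum>t<2*m. (if (t < m) = (i < m) then D t else 0)) - D i
                + (if pos i \<in> S then D (partner i) else 0)"
    using i partner_lt[OF i] by (simp add: sum.distrib sum_subtractf)
  also have "(\<Sum>t<2*m. (if (t < m) = (i < m) then D t else 0)) = (\<Sum>q<m. D (q + off i))"
    by (rule sum_half[OF i])
  also have "\<dots> = real m * PP i j - (\<Sum>q<m. PP (q + off i) j)"
    by (simp add: D_def sum_subtractf)
  also have "D i = 0" by (simp add: D_def)
  also have "(if pos i \<in> S then D (partner i) else 0) = (gg (pos i) - real m) / 2 * (sg i * sg j * Ai (pos i) (pos j))"
  proof -
    have "D (partner i) = sg i * sg j * Ai (pos i) (pos j)"
      using i by (simp add: D_def PP_def pos_partner sg_partner field_simps)
    then show ?thesis by (simp add: gg_def)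
  qed
  also have "(\<Sum>q<m. PP (q + off i) j) = sg i * sg j * uu (pos j) / gam / 2"
    by (rule sum_PP_half[OF j])
  finally have "(\<Sum>t<2*m. Phi0 i t * D t) =
      (real m * Kf (pos i) (pos j) + sg i * sg j * (gg (pos i) * Ai (pos i) (pos j) - uu (pos j) / gam)) / 2"
    by (simp add: PP_def field_simps)
  also have "\<dots> = ((if pos i = pos j then 1 else 0) - 1 / real m + sg i * sg j * (if pos i = pos j then 1 else 0)) / 2"
    using m_pos by (simp add: gg_Ai Kf_def)
  also have "\<dots> = (if i = j then 1 else 0) - 1 / real (2*m)"
    using i j m_pos by (auto simp: pos_def sg_def field_simps)
  finally show ?thesis by (simp add: D_def)
qed

end

context twoclust begin

definition U2 :: real where "U2 = (\<Sum>q<m. uu q * uu q)"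

lemma U2_val: "U2 = real k / (real m + 2)^2 + (real m - real k) / (real m)^2"
proof -
  have "U2 = (\<Sum>q<m. if q \<in> S then 1 / (real m + 2)^2 else 1 / (real m)^2)"
    unfolding U2_def by (intro sum.cong refl) (simp add: uu_def gg_def power2_eq_square)
  also have "\<dots> = real k / (real m + 2)^2 + (real m - real k) / (real m)^2" by (simp add: sum_S)
  finally show ?thesis .
qed

lemma sum_sq3:
  assumes a: "a < m" and b: "b < m"
  shows "(\<Sum>q<m. ((if q = a then x else 0) + (if q = b then y else 0) + z * uu q)^2)
     = x^2 + y^2 + (if a = b then 2*x*y else 0) + 2*x*z*uu a + 2*y*z*uu b + z^2 * U2"
proof -
  have "(\<Sum>q<m. ((if q = a then x else 0) + (if q = b then y else 0) + z * uu q)^2)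
      = (\<Sum>q<m. (if q = a then x*x + 2*x*z*uu a else 0) + (if q = b then y*y + 2*y*z*uu b else 0)
              + (if q = a then (if a = b then 2*x*y else 0) else 0) + z*z*(uu q * uu q))"
    by (intro sum.cong refl) (auto simp: power2_eq_square algebra_simps)
  also have "\<dots> = x*x + 2*x*z*uu a + (y*y + 2*y*z*uu b) + (if a = b then 2*x*y else 0) + z*z*U2"
    using a b by (simp add: sum.distrib U2_def sum_distrib_left)
  finally show ?thesis by (simp add: power2_eq_square)
qed

lemma rho_split:
  assumes a: "a < 2*m" and b: "b < 2*m"
  shows "(\<Sum>i<2*m. (PP a i - PP b i)^2) =
    (\<Sum>q<m. (Kf (pos a) q - Kf (pos b) q)^2 + (sg a * Ai (pos a) q - sg b * Ai (pos b) q)^2) / 2"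
proof -
  have "(\<Sum>i<2*m. (PP a i - PP b i)^2) = (\<Sum>q<m. (PP a q - PP b q)^2) + (\<Sum>q<m. (PP a (q+m) - PP b (q+m))^2)"
    by (rule sum_split)
  also have "\<dots> = (\<Sum>q<m. (PP a q - PP b q)^2 + (PP a (q+m) - PP b (q+m))^2)"
    by (simp add: sum.distrib)
  also have "\<dots> = (\<Sum>q<m. ((Kf (pos a) q - Kf (pos b) q)^2 + (sg a * Ai (pos a) q - sg b * Ai (pos b) q)^2) / 2)"
  proof (intro sum.cong refl)
    fix q assume q: "q \<in> {..<m}"
    then have "pos q = q" "pos (q+m) = q" "sg q = 1" "sg (q+m) = -1" by (auto simp: pos_def sg_def)
    then show "(PP a q - PP b q)^2 + (PP a (q+m) - PP b (q+m))^2 =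
       ((Kf (pos a) q - Kf (pos b) q)^2 + (sg a * Ai (pos a) q - sg b * Ai (pos b) q)^2) / 2"
      by (simp add: PP_def power2_eq_square field_simps)
  qed
  also have "\<dots> = (\<Sum>q<m. (Kf (pos a) q - Kf (pos b) q)^2 + (sg a * Ai (pos a) q - sg b * Ai (pos b) q)^2) / 2"
    by (simp add: sum_divide_distrib)
  finally show ?thesis .
qed

lemma Kf_diff_sum:
  assumes "a < m" "b < m" "a \<noteq> b"
  shows "(\<Sum>q<m. (Kf a q - Kf b q)^2) = 2 / (real m)^2"
proof -
  have "(\<Sum>q<m. (Kf a q - Kf b q)^2) = (\<Sum>q<m. ((if q = a then 1 / real m else 0) + (if q = b then - 1 / real m else 0) + 0 * uu q)^2)"
    using assms by (intro sum.cong refl) (auto simp: Kf_def field_simps)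
  also have "\<dots> = 2 / (real m)^2"
    using assms sum_sq3[of a b "1 / real m" "- 1 / real m" 0] by (simp add: power2_eq_square)
  finally show ?thesis .
qed

lemma Ai_diff_sum:
  assumes "a < m" "b < m" "a \<noteq> b"
  shows "(\<Sum>q<m. (Ai a q - Ai b q)^2) =
     (uu a)^2 + (uu b)^2 + 2 * uu a * ((uu a - uu b) / gam) * uu a - 2 * uu b * ((uu a - uu b) / gam) * uu b
     + ((uu a - uu b) / gam)^2 * U2"
proof -
  have "(\<Sum>q<m. (Ai a q - Ai b q)^2) = (\<Sum>q<m. ((if q = a then uu a else 0) + (if q = b then - uu b else 0) + ((uu a - uu b) / gam) * uu q)^2)"
  proof (intro sum.cong refl)
    fix q
    have "Ai a q - Ai b q = (if q = a then uu a else 0) + (if q = b then - uu b else 0) + ((uu a - uu b) / gam) * uu q"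
      using assms gam_pos by (auto simp: Ai_def field_simps)
    then show "(Ai a q - Ai b q)^2 = ((if q = a then uu a else 0) + (if q = b then - uu b else 0) + ((uu a - uu b) / gam) * uu q)^2"
      by simp
  qed
  also have "\<dots> = (uu a)^2 + (uu b)^2 + 2 * uu a * ((uu a - uu b) / gam) * uu a - 2 * uu b * ((uu a - uu b) / gam) * uu b
     + ((uu a - uu b) / gam)^2 * U2"
    using assms sum_sq3[of a b "uu a" "- uu b" "(uu a - uu b) / gam"] by (simp add: power2_eq_square)
  finally show ?thesis .
qed

lemma Ai_sq_sum:
  assumes "a < m"
  shows "(\<Sum>q<m. (Ai a q)^2) = (uu a)^2 + 2 * uu a * (uu a / gam) * uu a + (uu a / gam)^2 * U2"
proof -
  have "(\<Sum>q<m. (Ai a q)^2) = (\<Sum>q<m. ((if q = a then uu a else 0) + (if q = a then 0 else 0) + (uu a / gam) * uu q)^2)"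
  proof (intro sum.cong refl)
    fix q
    have "Ai a q = (if q = a then uu a else 0) + (if q = a then 0 else 0) + (uu a / gam) * uu q"
      using assms gam_pos by (auto simp: Ai_def field_simps)
    then show "(Ai a q)^2 = ((if q = a then uu a else 0) + (if q = a then 0 else 0) + (uu a / gam) * uu q)^2"
      by simp
  qed
  also have "\<dots> = (uu a)^2 + 2 * uu a * (uu a / gam) * uu a + (uu a / gam)^2 * U2"
    using assms sum_sq3[of a a "uu a" 0 "uu a / gam"] by (simp add: power2_eq_square)
  finally show ?thesis .
qed

end

lemma poly_m:
  fixes m :: real assumes m: "3 \<le> m"
  shows "2*(m*m)*((m+2)*(m+2)) + 6*(m*m)*(m*m) + 48*(m+1)*m + 6*m*(m*m) + 6*(m-1)*((m+2)*(m+2))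
         \<le> 4*(m*m*m)*((m+2)*(m+2))"
proof -
  obtain d where d: "m = 3 + d" "d \<ge> 0" using m by (metis add.commute diff_add_cancel diff_ge_0_iff_ge)
  have "4*(m*m*m)*((m+2)*(m+2)) - (2*(m*m)*((m+2)*(m+2)) + 6*(m*m)*(m*m) + 48*(m+1)*m + 6*m*(m*m) + 6*(m-1)*((m+2)*(m+2)))
        = 726 + 1884*d + 1402*(d*d) + 452*(d*d*d) + 68*(d*d*d*d) + 4*(d*d*d*d*d)"
    unfolding d(1) by (simp add: algebra_simps)
  also have "\<dots> \<ge> 0" using d(2) by (intro add_nonneg_nonneg mult_nonneg_nonneg) auto
  finally show ?thesis by simp
qed

lemma poly_mk:
  fixes m k :: real assumes m: "3 \<le> m" and k1: "1 \<le> k" and km: "k \<le> m"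
  shows "0 \<le> 4*m^3*(m+2)^2 + 16*k^2*(m+2)^2 - (18*k^2*(m+2)^2 + 6*k^2*m^2 + 48*(m+1)*k + 6*k*m^2 + 6*(m-k)*(m+2)^2)"
proof -
  have kk: "k*k \<le> m*m" using k1 km by (intro mult_mono) auto
  have p2: "(m+2)*(m+2) \<ge> 0" by simp
  have t1: "2*(k*k)*((m+2)*(m+2)) \<le> 2*(m*m)*((m+2)*(m+2))" using kk p2 by (intro mult_right_mono) auto
  have t2: "6*(k*k)*(m*m) \<le> 6*(m*m)*(m*m)" using kk by (intro mult_right_mono) auto
  have t3: "48*(m+1)*k \<le> 48*(m+1)*m" using km m by (intro mult_left_mono) auto
  have t4: "6*k*(m*m) \<le> 6*m*(m*m)" using km by (intro mult_right_mono) auto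
  have t5: "6*(m-k)*((m+2)*(m+2)) \<le> 6*(m-1)*((m+2)*(m+2))" using k1 p2 by (intro mult_right_mono) auto
  have P: "2*(m*m)*((m+2)*(m+2)) + 6*(m*m)*(m*m) + 48*(m+1)*m + 6*m*(m*m) + 6*(m-1)*((m+2)*(m+2))
         \<le> 4*(m*m*m)*((m+2)*(m+2))" by (rule poly_m[OF m])
  have eq: "4*m^3*(m+2)^2 + 16*k^2*(m+2)^2 - (18*k^2*(m+2)^2 + 6*k^2*m^2 + 48*(m+1)*k + 6*k*m^2 + 6*(m-k)*(m+2)^2)
     = 4*(m*m*m)*((m+2)*(m+2)) - (2*(k*k)*((m+2)*(m+2)) + 6*(k*k)*(m*m) + 48*(m+1)*k + 6*k*(m*m) + 6*(m-k)*((m+2)*(m+2)))"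
    by (simp add: algebra_simps power2_eq_square power3_eq_cube)
  show ?thesis unfolding eq using t1 t2 t3 t4 t5 P by linarith
qed

lemma mixed_ineq:
  fixes m k :: real assumes m: "3 \<le> m" and k1: "1 \<le> k" and km: "k \<le> m"
  defines "u1 \<equiv> 1 / (m+2)" and "u2 \<equiv> 1 / m" and "g \<equiv> 2*k / (m*(m+2))"
    and "U \<equiv> k / (m+2)^2 + (m-k) / m^2"
  shows "6*(2/m^2 + u1^2 + u2^2 + 2*(u1^2-u2^2)*(u1-u2)/g + (u1-u2)^2*U/g^2) \<le> 4*m/k^2 + 16/m^2"
proof -
  have pos: "m > 0" "k > 0" "m + 2 > 0" using m k1 by auto
  obtain p where p: "p = m + 2" by simp
  have pp: "p > 0" using p pos by simp
  have "4*m/k^2 + 16/m^2 - 6*(2/m^2 + u1^2 + u2^2 + 2*(u1^2-u2^2)*(u1-u2)/g + (u1-u2)^2*U/g^2)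
     = (4*m^3*(m+2)^2 + 16*k^2*(m+2)^2 - (18*k^2*(m+2)^2 + 6*k^2*m^2 + 48*(m+1)*k + 6*k*m^2 + 6*(m-k)*(m+2)^2))
       / (k^2*m^2*(m+2)^2)"
    unfolding u1_def u2_def g_def U_def p[symmetric]
    using pos pp by (simp add: field_simps power2_eq_square power3_eq_cube) (simp add: p algebra_simps)
  also have "\<dots> \<ge> 0" using poly_mk[OF m k1 km] pos by simp
  finally show ?thesis by simp
qed

lemma cross_ineq:
  fixes m k :: real assumes m: "3 \<le> m" and k1: "1 \<le> k" and km: "k \<le> m"
  defines "u \<equiv> 1 / (m+2)" and "g \<equiv> 2*k / (m*(m+2))"
    and "U \<equiv> k / (m+2)^2 + (m-k) / m^2"
  shows "16*(u^2 + 2*u*(u/g)*u + (u/g)^2*U) \<le> 4*m/k^2 + 16/m^2"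
proof -
  have pos: "m > 0" "k > 0" "m + 2 > 0" using m k1 by auto
  obtain p where p: "p = m + 2" by simp
  have pp: "p > 0" using p pos by simp
  have "16*(u^2 + 2*u*(u/g)*u + (u/g)^2*U) = 4*m/k^2 + 16/(m+2)^2 - 16/(k*(m+2)^2)"
    unfolding u_def g_def U_def p[symmetric]
    using pos pp by (simp add: field_simps power2_eq_square power3_eq_cube) (simp add: p algebra_simps)
  also have "\<dots> \<le> 4*m/k^2 + 16/m^2 - 0"
  proof -
    have "16/(m+2)^2 \<le> 16/m^2" using pos by (intro divide_left_mono power_mono) auto
    moreover have "16/(k*(m+2)^2) \<ge> 0" using pos by simp
    ultimately show ?thesis by linarith
  qed
  finally show ?thesis by simp
qed

context twoclust begin

abbreviation Bsq :: real where "Bsq \<equiv> 4 * real m / (real k)^2 + 16 / (real m)^2"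

lemma uu_S: "q \<in> S \<Longrightarrow> uu q = 1 / (real m + 2)" by (simp add: uu_def gg_def)
lemma uu_nS: "q \<notin> S \<Longrightarrow> uu q = 1 / real m" by (simp add: uu_def gg_def)
lemma gam_val: "gam = 2 * real k / (real m * (real m + 2))" by (simp add: gam_def)

lemma rho_within:
  assumes a: "a < 2*m" and b: "b < 2*m" and h: "(a < m) = (b < m)" and ab: "a \<noteq> b"
  shows "12 * (\<Sum>i<2*m. (PP a i - PP b i)^2) \<le> Bsq"
proof -
  have pa: "pos a < m" and pb: "pos b < m" using a b by (auto simp: pos_def)
  have pab: "pos a \<noteq> pos b" using a b h ab by (auto simp: pos_def)
  have sgab: "sg a = sg b" using h by (simp add: sg_def)
  have sq: "sg b * sg b = 1" by (simp add: sg_def)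
  define W where "W = (\<Sum>q<m. (Ai (pos a) q - Ai (pos b) q)^2)"
  have "(\<Sum>i<2*m. (PP a i - PP b i)^2) = (\<Sum>q<m. (Kf (pos a) q - Kf (pos b) q)^2 + (sg a * Ai (pos a) q - sg b * Ai (pos b) q)^2) / 2"
    by (rule rho_split[OF a b])
  also have "\<dots> = ((\<Sum>q<m. (Kf (pos a) q - Kf (pos b) q)^2) + W) / 2"
  proof -
    have "(sg a * Ai (pos a) q - sg b * Ai (pos b) q)^2 = (Ai (pos a) q - Ai (pos b) q)^2" for q
    proof -
      have "(sg a * Ai (pos a) q - sg b * Ai (pos b) q)^2 = (sg b * sg b) * (Ai (pos a) q - Ai (pos b) q)^2"
        unfolding sgab by (simp add: power2_eq_square algebra_simps)
      then show ?thesis using sq by simp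
    qed
    then show ?thesis by (simp add: W_def sum.distrib)
  qed
  also have "(\<Sum>q<m. (Kf (pos a) q - Kf (pos b) q)^2) = 2 / (real m)^2" by (rule Kf_diff_sum[OF pa pb pab])
  finally have rho: "(\<Sum>i<2*m. (PP a i - PP b i)^2) = (2 / (real m)^2 + W) / 2" .
  have Wv: "W = (uu (pos a))^2 + (uu (pos b))^2 + 2 * uu (pos a) * ((uu (pos a) - uu (pos b)) / gam) * uu (pos a)
      - 2 * uu (pos b) * ((uu (pos a) - uu (pos b)) / gam) * uu (pos b) + ((uu (pos a) - uu (pos b)) / gam)^2 * U2"
    unfolding W_def by (rule Ai_diff_sum[OF pa pb pab])
  have mr: "3 \<le> real m" "1 \<le> real k" "real k \<le> real m" using m3 k1 km by auto
  show ?thesis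
  proof (cases "(pos a \<in> S) = (pos b \<in> S)")
    case True
    then have eq: "uu (pos a) = uu (pos b)" by (simp add: uu_def gg_def)
    have ule: "uu (pos b) \<le> 1 / real m" using m_pos by (simp add: uu_def gg_def frac_le)
    have u0: "uu (pos b) \<ge> 0" using gg_pos[of "pos b"] by (simp add: uu_def)
    have "W = 2 * (uu (pos b))^2" using Wv eq by simp
    also have "\<dots> \<le> 2 * (1 / real m)^2" using ule u0 by (intro mult_left_mono power_mono) auto
    finally have W2: "W \<le> 2 / (real m)^2" by (simp add: power2_eq_square)
    have "12 * (\<Sum>i<2*m. (PP a i - PP b i)^2) \<le> 24 / (real m)^2" using rho W2 by simp
    also have "\<dots> \<le> Bsq"
    proof -
      have "8 / (real m)^2 \<le> 4 * real m / (real k)^2"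
      proof -
        have kk: "(real k)^2 \<le> (real m)^2" using mr by (intro power_mono) auto
        have "8 * (real k)^2 \<le> 8 * (real m)^2" using kk by simp
        also have "\<dots> \<le> 4 * real m * (real m)^2" using mr by (intro mult_right_mono) auto
        finally have "8 * (real k)^2 \<le> 4 * real m * (real m)^2" .
        then show ?thesis using m_pos k1 by (simp add: field_simps)
      qed
      then show ?thesis by simp
    qed
    finally show ?thesis .
  next
    case False
    define u1 where "u1 = 1 / (real m + 2)"
    define u2 where "u2 = 1 / real m"
    have gen: "x^2 + y^2 + 2*x*((x-y)/gam)*x - 2*y*((x-y)/gam)*y + ((x-y)/gam)^2*U2
        = x^2 + y^2 + 2*(x^2-y^2)*(x-y)/gam + (x-y)^2*U2/gam^2" for x y
      using gam_pos by (simp add: power2_eq_square field_simps)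
    have W': "W = u1^2 + u2^2 + 2*(u1^2-u2^2)*(u1-u2)/gam + (u1-u2)^2*U2/gam^2"
    proof (cases "pos a \<in> S")
      case True
      with False have "pos b \<notin> S" by simp
      then have "uu (pos a) = u1" "uu (pos b) = u2" using True by (simp_all add: uu_S uu_nS u1_def u2_def)
      then show ?thesis using Wv gen[of u1 u2] by simp
    next
      case nT: False
      with False have "pos b \<in> S" by simp
      then have "uu (pos a) = u2" "uu (pos b) = u1" using nT by (simp_all add: uu_S uu_nS u1_def u2_def)
      moreover have "u2^2 + u1^2 + 2*(u2^2-u1^2)*(u2-u1)/gam + (u2-u1)^2*U2/gam^2
          = u1^2 + u2^2 + 2*(u1^2-u2^2)*(u1-u2)/gam + (u1-u2)^2*U2/gam^2"
        by (simp add: power2_eq_square algebra_simps)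
      ultimately show ?thesis using Wv gen[of u2 u1] by simp
    qed
    have "12 * (\<Sum>i<2*m. (PP a i - PP b i)^2) = 6 * (2 / (real m)^2 + W)" using rho by simp
    also have "\<dots> = 6*(2/(real m)^2 + u1^2 + u2^2 + 2*(u1^2-u2^2)*(u1-u2)/gam + (u1-u2)^2*U2/gam^2)"
      using W' by simp
    also have "\<dots> \<le> Bsq"
      unfolding u1_def u2_def gam_val U2_val by (rule mixed_ineq[OF mr])
    finally show ?thesis .
  qed
qed

lemma rho_cross:
  assumes a: "a < m" and aS: "a \<in> S"
  shows "8 * (\<Sum>i<2*m. (PP a i - PP (a + m) i)^2) \<le> Bsq"
proof -
  have a2: "a < 2*m" "a + m < 2*m" using a by auto
  have ps: "pos a = a" "pos (a+m) = a" "sg a = 1" "sg (a+m) = -1" using a by (auto simp: pos_def sg_def)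
  have "(\<Sum>i<2*m. (PP a i - PP (a + m) i)^2) = (\<Sum>q<m. (Kf (pos a) q - Kf (pos (a+m)) q)^2 + (sg a * Ai (pos a) q - sg (a+m) * Ai (pos (a+m)) q)^2) / 2"
    by (rule rho_split[OF a2])
  also have "\<dots> = (\<Sum>q<m. 4 * (Ai a q)^2) / 2"
    unfolding ps by (intro arg_cong[where f="\<lambda>x. x / 2"] sum.cong refl) (simp add: power2_eq_square algebra_simps)
  also have "\<dots> = 2 * (\<Sum>q<m. (Ai a q)^2)" by (simp add: sum_distrib_left[symmetric])
  also have "(\<Sum>q<m. (Ai a q)^2) = (uu a)^2 + 2 * uu a * (uu a / gam) * uu a + (uu a / gam)^2 * U2"
    by (rule Ai_sq_sum[OF a])
  finally have "8 * (\<Sum>i<2*m. (PP a i - PP (a + m) i)^2) = 16 * ((uu a)^2 + 2 * uu a * (uu a / gam) * uu a + (uu a / gam)^2 * U2)"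
    by simp
  also have "\<dots> \<le> Bsq"
    unfolding uu_S[OF aS] gam_val U2_val using m3 k1 km by (intro cross_ineq) auto
  finally show ?thesis .
qed

end

lemma exp_le_quad:
  fixes y :: real assumes "y \<le> 1" shows "exp y \<le> 1 + y + y^2"
proof (cases "y \<ge> 0")
  case True then show ?thesis using exp_bound assms by blast
next
  case False
  then have y: "y < 0" by simp
  have "1 - y \<le> exp (-y)" using exp_ge_add_one_self[of "-y"] by simp
  then have "exp y \<le> 1 / (1 - y)" using y by (simp add: exp_minus field_simps)
  also have "\<dots> \<le> 1 + y + y^2"
  proof -
    have "1 \<le> (1 - y) * (1 + y + y^2)"
    proof -
      have "(1 - y) * (1 + y + y^2) = 1 - y^3" by (simp add: algebra_simps power2_eq_square power3_eq_cube)
      moreover have "y^3 \<le> 0"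
      proof -
        have "y * y \<ge> 0" by simp
        then have "(y * y) * y \<le> 0" using mult_nonneg_nonpos[of "y*y" y] y by simp
        then show ?thesis by (simp add: power3_eq_cube)
      qed
      ultimately show ?thesis by simp
    qed
    then show ?thesis using y by (simp add: field_simps)
  qed
  finally show ?thesis .
qed

lemma exp_le_lin_sq:
  fixes y :: real shows "exp y \<le> y + exp (y^2)"
proof (cases "y \<le> 1")
  case True
  have "exp y \<le> 1 + y + y^2" by (rule exp_le_quad[OF True])
  also have "\<dots> \<le> y + exp (y^2)" using exp_ge_add_one_self[of "y^2"] by simp
  finally show ?thesis .
next
  case False
  have yy: "y \<le> y^2" using False by (simp add: power2_eq_square)
  have e: "exp y \<le> exp (y^2)" using yy by simp
  show ?thesis using e False by linarith
qed

lemma nn_integral_exp_bound_aux: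
  assumes "integrable M f" and "\<And>x. x \<in> space M \<Longrightarrow> exp (g x) \<le> f x"
  shows "(\<integral>\<^sup>+x. ennreal (exp (g x)) \<partial>M) \<le> ennreal (\<integral>x. f x \<partial>M)"
proof -
  have f0: "\<And>x. x \<in> space M \<Longrightarrow> 0 \<le> f x" using assms(2) exp_ge_zero order_trans by blast
  have "(\<integral>\<^sup>+x. ennreal (exp (g x)) \<partial>M) \<le> (\<integral>\<^sup>+x. ennreal (f x) \<partial>M)"
    using assms(2) by (intro nn_integral_mono) (simp add: ennreal_leI)
  also have "\<dots> = ennreal (\<integral>x. f x \<partial>M)"
    using assms(1) f0 by (intro nn_integral_eq_integral) auto
  finally show ?thesis .
qed

lemma mgf_bound:
  fixes X :: "'a \<Rightarrow> real"
  assumes P: "prob_space M" and Xm: "X \<in> borel_measurable M" and Xi: "integrable M X"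
    and X0: "prob_space.expectation M X = 0" and K: "K > 0"
    and psi: "(\<integral>\<^sup>+\<omega>. ennreal (exp ((X \<omega>)^2 / K^2)) \<partial>M) \<le> 2"
  shows "(\<integral>\<^sup>+\<omega>. ennreal (exp (lam * X \<omega>)) \<partial>M) \<le> ennreal (exp (lam^2 * K^2))"
proof -
  interpret prob_space M by (rule P)
  define Z where "Z \<omega> = (X \<omega>)^2 / K^2" for \<omega>
  define t where "t = lam^2 * K^2"
  have t0: "t \<ge> 0" by (simp add: t_def)
  have Zm: "(\<lambda>\<omega>. exp (Z \<omega>)) \<in> borel_measurable M" unfolding Z_def using Xm by measurable
  have eZi: "integrable M (\<lambda>\<omega>. exp (Z \<omega>))"
  proof (rule integrableI_bounded[OF Zm])
    have "(\<integral>\<^sup>+\<omega>. ennreal (norm (exp (Z \<omega>))) \<partial>M) = (\<integral>\<^sup>+\<omega>. ennreal (exp ((X \<omega>)^2 / K^2)) \<partial>M)"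
      by (simp add: Z_def)
    also have "\<dots> < \<infinity>" using psi by (simp add: order_le_less_trans)
    finally show "(\<integral>\<^sup>+\<omega>. ennreal (norm (exp (Z \<omega>))) \<partial>M) < \<infinity>" .
  qed
  have eZ2: "(\<integral>\<omega>. exp (Z \<omega>) \<partial>M) \<le> 2"
  proof -
    have "ennreal (\<integral>\<omega>. exp (Z \<omega>) \<partial>M) = (\<integral>\<^sup>+\<omega>. ennreal (exp (Z \<omega>)) \<partial>M)"
      using eZi by (intro nn_integral_eq_integral[symmetric]) auto
    also have "\<dots> \<le> 2" using psi by (simp add: Z_def)
    finally have "ennreal (\<integral>\<omega>. exp (Z \<omega>) \<partial>M) \<le> ennreal 2" by simp
    then show ?thesis using ennreal_le_iff[of 2] by simp
  qed
  show ?thesis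
  proof (cases "t \<le> 1")
    case True
    define f where "f \<omega> = lam * X \<omega> + (1 - t) + t * exp (Z \<omega>)" for \<omega>
    have fi: "integrable M f" unfolding f_def using Xi eZi by auto
    have pw: "exp (lam * X \<omega>) \<le> f \<omega>" for \<omega>
    proof -
      have "exp (lam * X \<omega>) \<le> lam * X \<omega> + exp ((lam * X \<omega>)^2)" by (rule exp_le_lin_sq)
      also have "(lam * X \<omega>)^2 = (1 - t) * 0 + t * Z \<omega>"
        using K by (simp add: t_def Z_def power_mult_distrib field_simps)
      also have "exp \<dots> \<le> (1 - t) * exp 0 + t * exp (Z \<omega>)"
      proof -
        have c: "convex_on UNIV exp" by (rule exp_convex)
        show ?thesis using convex_onD[OF c, of t 0 "Z \<omega>"] True t0 by simp
      qed
      finally show ?thesis by (simp add: f_def)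
    qed
    have "(\<integral>\<^sup>+\<omega>. ennreal (exp (lam * X \<omega>)) \<partial>M) \<le> ennreal (\<integral>\<omega>. f \<omega> \<partial>M)"
      by (rule nn_integral_exp_bound_aux[OF fi]) (rule pw)
    also have "(\<integral>\<omega>. f \<omega> \<partial>M) = lam * 0 + (1 - t) + t * (\<integral>\<omega>. exp (Z \<omega>) \<partial>M)"
      unfolding f_def using Xi eZi X0 by (simp add: prob_space)
    also have "\<dots> \<le> 1 + t"
    proof -
      have "t * (\<integral>\<omega>. exp (Z \<omega>) \<partial>M) \<le> t * 2" using eZ2 t0 by (rule mult_left_mono)
      then show ?thesis by linarith
    qed
    also have "1 + t \<le> exp t" by (rule exp_ge_add_one_self)
    finally show ?thesis by (simp add: t_def ennreal_leI)
  next
    case False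
    define f where "f \<omega> = exp (t / 2) * ((1 + exp (Z \<omega>)) / 2)" for \<omega>
    have fi: "integrable M f" unfolding f_def using eZi by auto
    have pw: "exp (lam * X \<omega>) \<le> f \<omega>" for \<omega>
    proof -
      have "lam * X \<omega> \<le> t / 2 + Z \<omega> / 2"
      proof -
        have "0 \<le> (lam * K - X \<omega> / K)^2" by simp
        also have "(lam * K - X \<omega> / K)^2 = t + Z \<omega> - 2 * (lam * X \<omega>)"
          using K by (simp add: t_def Z_def power2_eq_square field_simps)
        finally show ?thesis by simp
      qed
      then have "exp (lam * X \<omega>) \<le> exp (t / 2) * exp (Z \<omega> / 2)" by (simp add: exp_add[symmetric])
      also have "exp (Z \<omega> / 2) \<le> (1 + exp (Z \<omega>)) / 2"
      proof -
        have "0 \<le> (exp (Z \<omega> / 2) - 1)^2" by simp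
        moreover have "exp (Z \<omega>) = exp (Z \<omega> / 2)^2" by (simp add: power2_eq_square exp_add[symmetric])
        ultimately show ?thesis by (simp add: power2_eq_square algebra_simps)
      qed
      finally show ?thesis by (simp add: f_def mult_left_mono)
    qed
    have "(\<integral>\<^sup>+\<omega>. ennreal (exp (lam * X \<omega>)) \<partial>M) \<le> ennreal (\<integral>\<omega>. f \<omega> \<partial>M)"
      by (rule nn_integral_exp_bound_aux[OF fi]) (rule pw)
    also have "(\<integral>\<omega>. f \<omega> \<partial>M) = exp (t / 2) * ((1 + (\<integral>\<omega>. exp (Z \<omega>) \<partial>M)) / 2)"
      unfolding f_def using eZi by (simp add: prob_space)
    also have "\<dots> \<le> exp (t / 2) * (3 / 2)" using eZ2 by (intro mult_left_mono) auto
    also have "\<dots> \<le> exp (t / 2) * exp (t / 2)"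
    proof -
      have "3 / 2 \<le> 1 + t / 2" using False by simp
      also have "\<dots> \<le> exp (t / 2)" by (rule exp_ge_add_one_self)
      finally show ?thesis by (intro mult_left_mono) auto
    qed
    also have "\<dots> = exp t" by (simp add: exp_add[symmetric])
    finally show ?thesis by (simp add: t_def ennreal_leI)
  qed
qed

lemma sum_tail_one:
  fixes X :: "nat \<Rightarrow> 'a \<Rightarrow> real" and r :: "nat \<Rightarrow> real"
  assumes P: "prob_space M" and fin: "finite I"
    and ind: "prob_space.indep_vars M (\<lambda>_. borel) X I"
    and Xi: "\<And>i. i \<in> I \<Longrightarrow> integrable M (X i) \<and> prob_space.expectation M (X i) = 0 \<and>
               (\<integral>\<^sup>+\<omega>. ennreal (exp ((X i \<omega>)^2 / K^2)) \<partial>M) \<le> 2"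
    and K: "K > 0" and rs: "(\<Sum>i\<in>I. (r i)^2) \<le> \<rho>" and rho: "\<rho> > 0" and a: "a \<ge> 0"
  shows "measure M {\<omega> \<in> space M. a \<le> (\<Sum>i\<in>I. r i * X i \<omega>)} \<le> exp (- (a^2) / (4 * K^2 * \<rho>))"
proof -
  interpret prob_space M by (rule P)
  have Xm[measurable]: "X i \<in> borel_measurable M" if "i \<in> I" for i
    using Xi[OF that] by (auto dest: borel_measurable_integrable)
  show ?thesis
  proof (cases "a = 0")
    case True then show ?thesis by simp
  next
    case False
    then have a0: "a > 0" using a by simp
    define lam where "lam = a / (2 * K^2 * \<rho>)"
    have lam: "lam > 0" using a0 K rho by (simp add: lam_def)
    define Y where "Y \<omega> = (\<Sum>i\<in>I. r i * X i \<omega>)" for \<omega>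
    have Ym[measurable]: "Y \<in> borel_measurable M" unfolding Y_def
      by (intro borel_measurable_sum borel_measurable_times borel_measurable_const) (auto intro: Xm)
    have "emeasure M {\<omega>\<in>space M. Y \<omega> \<ge> a} \<le>
          ennreal (exp (-lam * a)) * (\<integral>\<^sup>+\<omega>. ennreal (exp (lam * Y \<omega>)) * indicator (space M) \<omega> \<partial>M)"
      by (intro Chernoff_ineq_nn_integral_ge lam) auto
    also have "(\<integral>\<^sup>+\<omega>. ennreal (exp (lam * Y \<omega>)) * indicator (space M) \<omega> \<partial>M)
             = (\<integral>\<^sup>+\<omega>. (\<Prod>i\<in>I. ennreal (exp ((lam * r i) * X i \<omega>))) \<partial>M)"
      by (intro nn_integral_cong)
         (simp_all add: Y_def sum_distrib_left exp_sum fin prod_ennreal mult_ac)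
    also have "\<dots> = (\<Prod>i\<in>I. \<integral>\<^sup>+\<omega>. ennreal (exp ((lam * r i) * X i \<omega>)) \<partial>M)"
      by (intro indep_vars_nn_integral fin indep_vars_compose2[OF ind]) auto
    also have "ennreal (exp (-lam * a)) * \<dots> \<le>
               ennreal (exp (-lam * a)) * (\<Prod>i\<in>I. ennreal (exp ((lam * r i)^2 * K^2)))"
    proof (intro mult_left_mono prod_mono_ennreal)
      fix i assume i: "i \<in> I"
      show "(\<integral>\<^sup>+\<omega>. ennreal (exp ((lam * r i) * X i \<omega>)) \<partial>M) \<le> ennreal (exp ((lam * r i)^2 * K^2))"
        using Xi[OF i] by (intro mgf_bound[OF P Xm[OF i] _ _ K]) auto
    qed auto
    also have "\<dots> = ennreal (exp (-lam * a) * (\<Prod>i\<in>I. exp ((lam * r i)^2 * K^2)))"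
      by (simp add: prod_ennreal prod_nonneg flip: ennreal_mult)
    also have "exp (-lam * a) * (\<Prod>i\<in>I. exp ((lam * r i)^2 * K^2)) = exp (lam^2 * K^2 * (\<Sum>i\<in>I. (r i)^2) - lam * a)"
      by (simp add: exp_diff exp_minus exp_sum fin sum_distrib_left power_mult_distrib mult_ac divide_inverse)
    also have "\<dots> \<le> exp (lam^2 * K^2 * \<rho> - lam * a)"
      using rs by (intro exp_mono diff_right_mono mult_left_mono) auto
    also have "lam^2 * K^2 * \<rho> - lam * a = - (a^2) / (4 * K^2 * \<rho>)"
      using K rho by (simp add: lam_def field_simps power2_eq_square)
    finally have "emeasure M {\<omega>\<in>space M. Y \<omega> \<ge> a} \<le> ennreal (exp (- (a^2) / (4 * K^2 * \<rho>)))"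
      by (simp add: ennreal_leI)
    then show ?thesis by (simp add: Y_def emeasure_eq_measure)
  qed
qed

lemma sum_tail_abs:
  fixes X :: "nat \<Rightarrow> 'a \<Rightarrow> real" and r :: "nat \<Rightarrow> real"
  assumes P: "prob_space M" and fin: "finite I"
    and ind: "prob_space.indep_vars M (\<lambda>_. borel) X I"
    and Xi: "\<And>i. i \<in> I \<Longrightarrow> integrable M (X i) \<and> prob_space.expectation M (X i) = 0 \<and>
               (\<integral>\<^sup>+\<omega>. ennreal (exp ((X i \<omega>)^2 / K^2)) \<partial>M) \<le> 2"
    and K: "K > 0" and rs: "(\<Sum>i\<in>I. (r i)^2) \<le> \<rho>" and rho: "\<rho> > 0" and a: "a \<ge> 0"
  shows "measure M {\<omega> \<in> space M. a \<le> \<bar>\<Sum>i\<in>I. r i * X i \<omega>\<bar>} \<le> 2 * exp (- (a^2) / (4 * K^2 * \<rho>))"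
proof -
  interpret prob_space M by (rule P)
  have Xm[measurable]: "X i \<in> borel_measurable M" if "i \<in> I" for i
    using Xi[OF that] by (auto dest: borel_measurable_integrable)
  have Ym[measurable]: "(\<lambda>\<omega>. \<Sum>i\<in>I. r i * X i \<omega>) \<in> borel_measurable M"
    by (intro borel_measurable_sum borel_measurable_times borel_measurable_const) (auto intro: Xm)
  have rs': "(\<Sum>i\<in>I. (- r i)^2) \<le> \<rho>" using rs by simp
  have "{\<omega> \<in> space M. a \<le> \<bar>\<Sum>i\<in>I. r i * X i \<omega>\<bar>} =
        {\<omega> \<in> space M. a \<le> (\<Sum>i\<in>I. r i * X i \<omega>)} \<union> {\<omega> \<in> space M. a \<le> (\<Sum>i\<in>I. (- r i) * X i \<omega>)}"
    by (auto simp: sum_negf abs_if)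
  also have "measure M \<dots> \<le> measure M {\<omega> \<in> space M. a \<le> (\<Sum>i\<in>I. r i * X i \<omega>)}
      + measure M {\<omega> \<in> space M. a \<le> (\<Sum>i\<in>I. (- r i) * X i \<omega>)}"
    by (intro measure_Un_le) (auto simp: sum_negf)
  also have "\<dots> \<le> exp (- (a^2) / (4 * K^2 * \<rho>)) + exp (- (a^2) / (4 * K^2 * \<rho>))"
    by (intro add_mono sum_tail_one[OF P fin ind Xi K _ rho a] rs rs') auto
  finally show ?thesis by simp
qed

lemma subg_K:
  fixes Y :: "'a \<Rightarrow> nat \<Rightarrow> real"
  assumes sg: "subgaussian_norm M p Y = ereal \<sigma>" and l: "l < p" and K: "K > \<sigma>"
  shows "(\<integral>\<^sup>+\<omega>. ennreal (exp ((Y \<omega> l)^2 / K^2)) \<partial>M) \<le> 2" and "\<sigma> \<ge> 0"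
proof -
  define v where "v j = (if j = l then 1 else 0 :: real)" for j
  define A where "A = {K :: real. K > 0 \<and>
            (\<integral>\<^sup>+ \<omega>. ennreal (exp ((\<Sum>j<p. v j * Y \<omega> j)\<^sup>2 / K\<^sup>2)) \<partial>M) \<le> 2}"
  have vV: "v \<in> {v :: nat \<Rightarrow> real. (\<Sum>j<p. (v j)\<^sup>2) = 1}"
    using l by (simp add: v_def if_distrib[of "\<lambda>x. x^2"] cong: if_cong)
  have sv: "(\<Sum>j<p. v j * Y \<omega> j) = Y \<omega> l" for \<omega>
    using l by (simp add: v_def if_distrib[of "\<lambda>x. x * _"] cong: if_cong)
  have "(INF K' \<in> A. ereal K') \<le> subgaussian_norm M p Y"
    unfolding subgaussian_norm_def A_def using vV by (rule SUP_upper2) simp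
  then have inf: "(INF K' \<in> A. ereal K') \<le> ereal \<sigma>" using sg by simp
  have inf0: "0 \<le> (INF K' \<in> A. ereal K')" by (rule INF_greatest) (auto simp: A_def)
  show "\<sigma> \<ge> 0" using order_trans[OF inf0 inf] by simp
  have "(INF K' \<in> A. ereal K') < ereal K" using inf K by (simp add: le_less_trans)
  then obtain K' where K': "K' \<in> A" "ereal K' < ereal K" by (auto simp: INF_less_iff)
  then have K'0: "K' > 0" and K'K: "K' < K"
    and c: "(\<integral>\<^sup>+ \<omega>. ennreal (exp ((Y \<omega> l)\<^sup>2 / K'\<^sup>2)) \<partial>M) \<le> 2"
    by (auto simp: A_def sv)
  have "(\<integral>\<^sup>+\<omega>. ennreal (exp ((Y \<omega> l)^2 / K^2)) \<partial>M) \<le> (\<integral>\<^sup>+ \<omega>. ennreal (exp ((Y \<omega> l)\<^sup>2 / K'\<^sup>2)) \<partial>M)"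
  proof (intro nn_integral_mono ennreal_leI)
    fix \<omega>
    have "K'^2 \<le> K^2" using K'0 K'K by (intro power_mono) auto
    then have "(Y \<omega> l)^2 / K^2 \<le> (Y \<omega> l)^2 / K'^2" using K'0 K'K by (intro divide_left_mono) auto
    then show "exp ((Y \<omega> l)^2 / K^2) \<le> exp ((Y \<omega> l)^2 / K'^2)" by simp
  qed
  then show "(\<integral>\<^sup>+\<omega>. ennreal (exp ((Y \<omega> l)^2 / K^2)) \<partial>M) \<le> 2" using c by simp
qed

lemma tail_limit:
  fixes f :: "'a \<Rightarrow> real"
  assumes P: "prob_space M" and fm[measurable]: "f \<in> borel_measurable M" and s: "s > 0"
    and bnd: "\<And>K. K > \<sigma> \<Longrightarrow> measure M {\<omega> \<in> space M. K * s \<le> \<bar>f \<omega>\<bar>} \<le> B"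
  shows "measure M {\<omega> \<in> space M. \<sigma> * s < \<bar>f \<omega>\<bar>} \<le> B"
proof -
  interpret prob_space M by (rule P)
  define A where "A j = {\<omega> \<in> space M. (\<sigma> + 1 / real (Suc j)) * s \<le> \<bar>f \<omega>\<bar>}" for j
  have As: "range A \<subseteq> sets M" unfolding A_def by auto
  have inc: "incseq A"
  proof (rule incseq_SucI)
    fix j
    have "1 / real (Suc (Suc j)) \<le> 1 / real (Suc j)" by (simp add: frac_le)
    then have "(\<sigma> + 1 / real (Suc (Suc j))) * s \<le> (\<sigma> + 1 / real (Suc j)) * s" using s by (intro mult_right_mono) auto
    then show "A j \<subseteq> A (Suc j)" unfolding A_def by auto
  qed
  have U: "(\<Union>j. A j) = {\<omega> \<in> space M. \<sigma> * s < \<bar>f \<omega>\<bar>}"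
  proof (intro equalityI subsetI)
    fix \<omega> assume "\<omega> \<in> (\<Union>j. A j)"
    then obtain j where "\<omega> \<in> A j" by auto
    moreover have "\<sigma> * s < (\<sigma> + 1 / real (Suc j)) * s" using s by (simp add: distrib_right)
    ultimately show "\<omega> \<in> {\<omega> \<in> space M. \<sigma> * s < \<bar>f \<omega>\<bar>}" unfolding A_def by auto
  next
    fix \<omega> assume w: "\<omega> \<in> {\<omega> \<in> space M. \<sigma> * s < \<bar>f \<omega>\<bar>}"
    then have "0 < (\<bar>f \<omega>\<bar> - \<sigma> * s) / s" using s by simp
    then obtain j where j: "inverse (real (Suc j)) < (\<bar>f \<omega>\<bar> - \<sigma> * s) / s"
      using reals_Archimedean by blast
    then have "1 / real (Suc j) * s < \<bar>f \<omega>\<bar> - \<sigma> * s" using s by (simp add: field_simps)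
    then have "(\<sigma> + 1 / real (Suc j)) * s \<le> \<bar>f \<omega>\<bar>" by (simp add: distrib_right)
    then show "\<omega> \<in> (\<Union>j. A j)" using w unfolding A_def by auto
  qed
  have lim: "(\<lambda>j. measure M (A j)) \<longlonglongrightarrow> measure M (\<Union>j. A j)"
    by (rule finite_Lim_measure_incseq[OF As inc])
  have "\<forall>j. measure M (A j) \<le> B"
  proof
    fix j
    have "\<sigma> < \<sigma> + 1 / real (Suc j)" by simp
    then show "measure M (A j) \<le> B" unfolding A_def by (rule bnd)
  qed
  then have "measure M (\<Union>j. A j) \<le> B" using lim by (intro LIMSEQ_le_const2) auto
  then show ?thesis using U by simp
qed

lemma max_norm_le_iff:
  fixes A :: "real mat" assumes T: "T \<ge> 0"
  shows "max_norm A \<le> T \<longleftrightarrow> (\<forall>i<dim_row A. \<forall>j<dim_col A. \<bar>A $$ (i,j)\<bar> \<le> T)"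
proof -
  let ?X = "{\<bar>A $$ (i, j)\<bar> | i j. i < dim_row A \<and> j < dim_col A}"
  have "?X \<subseteq> (\<lambda>(i,j). \<bar>A $$ (i, j)\<bar>) ` ({..<dim_row A} \<times> {..<dim_col A})" by auto
  then have fin: "finite ?X" by (rule finite_subset) auto
  have "max_norm A \<le> T \<longleftrightarrow> (\<forall>x\<in>?X \<union> {0}. x \<le> T)"
    unfolding max_norm_def using fin by (subst Max_le_iff) auto
  also have "\<dots> \<longleftrightarrow> (\<forall>i<dim_row A. \<forall>j<dim_col A. \<bar>A $$ (i,j)\<bar> \<le> T)" using T by blast
  finally show ?thesis .
qed

lemma card_edge_set: "2 * card (edge_set n \<Phi>) \<le> n * n"
proof -
  let ?T = "{(i,j). i < j \<and> j < n}"
  let ?T' = "(\<lambda>(i,j). (j,i)) ` ?T"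
  have sub: "edge_set n \<Phi> \<subseteq> ?T" by (auto simp: edge_set_def)
  have finT: "finite ?T" by (rule finite_subset[of _ "{..<n} \<times> {..<n}"]) auto
  have "card ?T' = card ?T" by (rule card_image) (auto simp: inj_on_def)
  moreover have "?T \<inter> ?T' = {}" by auto
  moreover have "?T \<union> ?T' \<subseteq> {..<n} \<times> {..<n}" by auto
  ultimately have "card ?T + card ?T \<le> n * n"
    using finT card_Un_disjoint[of ?T ?T'] card_mono[of "{..<n} \<times> {..<n}" "?T \<union> ?T'"]
    by (simp add: card_cartesian_product)
  moreover have "card (edge_set n \<Phi>) \<le> card ?T" using sub finT by (rule card_mono[rotated])
  ultimately show ?thesis by simp
qed

context twoclust begin

lemma caseB:
  fixes M :: "'a measure" and n p :: nat and \<sigma> :: real and E :: "'a \<Rightarrow> nat \<Rightarrow> nat \<Rightarrow> real"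
    and U :: "nat \<Rightarrow> nat \<Rightarrow> real" and c1 c2 :: "nat \<Rightarrow> real" and \<Phi> :: "nat \<Rightarrow> nat \<Rightarrow> real" and l0 :: nat
  assumes P: "prob_space M" and n2: "n = 2*m" and p1: "p \<ge> 1"
    and U1: "\<forall>i < m. \<forall>l < p. U i l = c1 l"
    and U2: "\<forall>i. m \<le> i \<and> i < n \<longrightarrow> (\<forall>l < p. U i l = c2 l)"
    and indep: "prob_space.indep_vars M (\<lambda>_. PiM {..<p} (\<lambda>_. borel))
                  (\<lambda>i \<omega>. restrict (E \<omega> i) {..<p}) {..<n}"
    and mean0: "\<forall>i < n. \<forall>l < p. integrable M (\<lambda>\<omega>. E \<omega> i l) \<and>
                  prob_space.expectation M (\<lambda>\<omega>. E \<omega> i l) = 0"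
    and subg: "\<forall>i < n. subgaussian_norm M p (\<lambda>\<omega>. E \<omega> i) = ereal \<sigma>"
    and Phi: "\<forall>i < n. \<forall>j < n. \<Phi> i j =
       (if i \<noteq> j \<and> ((\<forall>l < p. U i l = U j l)
             \<or> (i \<in> S \<and> j = i + m) \<or> (j \<in> S \<and> i = j + m))
        then 1 else 0)"
    and l0: "l0 < p" "c1 l0 \<noteq> c2 l0"
  shows "prob_space.prob M {\<omega> \<in> space M.
      max_norm (pseudo_inverse (incidence_mat n \<Phi>) * mat n p (\<lambda>(i, l). E \<omega> i l))
        / (real n * sqrt (real p))
        * (\<Sum>(i, j) \<in> edge_set n \<Phi>. sqrt (\<Phi> i j) * vnorm p (\<lambda>l. U i l - U j l))
      \<le> \<sigma> * sqrt (ln (real (n * p)) / real p)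
        * (sqrt (2 / real n) + 8 * real k / (real n)\<^sup>2)
        * vnorm p (\<lambda>l. c1 l - c2 l)}
    \<ge> 1 - 2 / (real n * real p)"
proof -
  interpret P: prob_space M by (rule P)
  have m0: "m > 0" using m3 by simp
  have n0: "n > 0" using n2 m0 by simp
  have half: "(\<forall>l<p. U i l = U j l) \<longleftrightarrow> ((i < m) = (j < m))" if ij: "i < n" "j < n" for i j
  proof (cases "i < m"; cases "j < m")
    assume "i < m" "j < m" then show ?thesis using U1 by simp
  next
    assume "\<not> i < m" "\<not> j < m" then show ?thesis using U2 ij by simp
  next
    assume a: "i < m" "\<not> j < m"
    then have "U i l0 = c1 l0" "U j l0 = c2 l0" using U1 U2 ij l0 by auto
    then show ?thesis using a l0 by auto
  next
    assume a: "\<not> i < m" "j < m"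
    then have "U i l0 = c2 l0" "U j l0 = c1 l0" using U1 U2 ij l0 by auto
    then show ?thesis using a l0 by auto
  qed
  have PhiE: "\<Phi> i j = Phi0 i j" if ij: "i < n" "j < n" for i j
    using Phi ij half[OF ij] m0 unfolding Phi0_def by auto
  have H01: "\<forall>i<n. \<forall>j<n. \<Phi> i j = 0 \<or> \<Phi> i j = 1" using PhiE by (simp add: Phi0_def)
  have symP: "\<forall>i<n. \<forall>j<n. \<Phi> i j = \<Phi> j i" using PhiE by (auto simp: Phi0_def)
  have pinv: "pseudo_inverse (incidence_mat n \<Phi>) = Rmat n \<Phi> PP"
  proof (rule incidence_pinv[OF H01 symP])
    show "\<forall>i<n. \<forall>j<n. PP i j = PP j i" using PP_sym by blast
    show "\<forall>i<n. (\<Sum>j<n. PP i j) = 0" using PP_row n2 by simp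
    show "\<forall>i<n. \<forall>j<n. (\<Sum>t<n. \<Phi> i t * (PP i j - PP t j)) = (if i = j then 1 else 0) - 1 / real n"
    proof (intro allI impI)
      fix i j assume ij: "i < n" "j < n"
      have "(\<Sum>t<n. \<Phi> i t * (PP i j - PP t j)) = (\<Sum>t<2*m. Phi0 i t * (PP i j - PP t j))"
        using ij n2 by (intro sum.cong) (auto simp: PhiE)
      also have "\<dots> = (if i = j then 1 else 0) - 1 / real (2*m)" using ij n2 by (intro LP) auto
      finally show "(\<Sum>t<n. \<Phi> i t * (PP i j - PP t j)) = (if i = j then 1 else 0) - 1 / real n"
        using n2 by simp
    qed
  qed

  have sig0: "\<sigma> \<ge> 0" using subg_K(2)[of M p "\<lambda>\<omega>. E \<omega> 0" \<sigma> l0 "\<sigma> + 1"] subg n0 l0 by auto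
  have Kc: "(\<integral>\<^sup>+\<omega>. ennreal (exp ((E \<omega> i l)^2 / K^2)) \<partial>M) \<le> 2" if "i < n" "l < p" "K > \<sigma>" for i l K
    using subg_K(1)[of M p "\<lambda>\<omega>. E \<omega> i" \<sigma> l K] subg that by auto
  have Em[measurable]: "(\<lambda>\<omega>. E \<omega> i l) \<in> borel_measurable M" if "i < n" "l < p" for i l
    using mean0 that by (auto dest: borel_measurable_integrable)
  have indl: "P.indep_vars (\<lambda>_. borel) (\<lambda>i \<omega>. E \<omega> i l) {..<n}" if l: "l < p" for l
  proof -
    have "P.indep_vars (\<lambda>_. borel) (\<lambda>i \<omega>. (\<lambda>f. f l) (restrict (E \<omega> i) {..<p})) {..<n}"
      by (rule P.indep_vars_compose2[OF indep]) (use l in auto)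
    moreover have "(\<lambda>i \<omega>. (\<lambda>f. f l) (restrict (E \<omega> i) {..<p})) = (\<lambda>i \<omega>. E \<omega> i l)"
      using l by (auto simp: fun_eq_iff)
    ultimately show ?thesis by simp
  qed
  define es where "es = edge_list n \<Phi>"
  define L where "L = length es"
  define Y where "Y c l \<omega> = (\<Sum>i<n. (PP (fst (es!c)) i - PP (snd (es!c)) i) * E \<omega> i l)" for c l \<omega>
  define A where "A \<omega> = Rmat n \<Phi> PP * mat n p (\<lambda>(i, l). E \<omega> i l)" for \<omega>
  have dimA: "dim_row (A \<omega>) = L" "dim_col (A \<omega>) = p" for \<omega>
    by (simp_all add: A_def Rmat_def L_def es_def)
  have entry: "A \<omega> $$ (c,l) = Y c l \<omega>" if "c < L" "l < p" for \<omega> c l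
  proof -
    have "A \<omega> $$ (c,l) = (\<Sum>i\<in>{0..<n}. Rmat n \<Phi> PP $$ (c,i) * mat n p (\<lambda>(i, l). E \<omega> i l) $$ (i,l))"
      using that by (simp add: A_def Rmat_def L_def es_def scalar_prod_def)
    also have "\<dots> = Y c l \<omega>"
      unfolding Y_def using that by (intro sum.cong) (auto simp: R_entry L_def es_def lessThan_atLeast0)
    finally show ?thesis .
  qed
  have esn: "fst (es!c) < snd (es!c)" "snd (es!c) < n" "fst (es!c) < n" "Phi0 (fst (es!c)) (snd (es!c)) \<noteq> 0"
    if "c < L" for c
  proof -
    show 1: "fst (es!c) < snd (es!c)" "snd (es!c) < n" using edge_list_nth that by (auto simp: L_def es_def)
    then show 3: "fst (es!c) < n" by simp
    show "Phi0 (fst (es!c)) (snd (es!c)) \<noteq> 0"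
      using edge_list_nth(3)[of c n \<Phi>] that PhiE[OF 3 1(2)] by (simp add: L_def es_def)
  qed
  have cls: "(snd e = fst e + m \<and> fst e \<in> S \<and> fst e < m) \<or> (snd e \<noteq> fst e + m \<and> (fst e < m) = (snd e < m) \<and> fst e \<noteq> snd e)"
    if "fst e < snd e" "snd e < n" "Phi0 (fst e) (snd e) \<noteq> 0" for e
    using that S_sub n2 by (auto simp: Phi0_def split: if_splits)

  define V where "V = vnorm p (\<lambda>l. c1 l - c2 l)"
  have V0: "V > 0"
  proof -
    have "0 < (c1 l0 - c2 l0)^2" using l0 by simp
    also have "\<dots> \<le> (\<Sum>l<p. (c1 l - c2 l)^2)" using l0 by (intro member_le_sum) auto
    finally show ?thesis by (simp add: V_def vnorm_def)
  qed
  define C where "C = {e \<in> edge_set n \<Phi>. snd e = fst e + m}"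
  have Cimg: "C = (\<lambda>i. (i, i + m)) ` S"
  proof (intro equalityI subsetI)
    fix e assume e: "e \<in> C"
    then have "fst e < snd e" "snd e < n" "\<Phi> (fst e) (snd e) \<noteq> 0" by (auto simp: C_def edge_set_def)
    moreover have "fst e < n" using calculation by simp
    ultimately have "Phi0 (fst e) (snd e) \<noteq> 0" using PhiE by simp
    then have "fst e \<in> S" using cls[of e] e \<open>fst e < snd e\<close> \<open>snd e < n\<close> by (auto simp: C_def)
    then show "e \<in> (\<lambda>i. (i, i + m)) ` S" using e by (auto simp: C_def prod_eq_iff intro!: image_eqI[of _ _ "fst e"])
  next
    fix e assume "e \<in> (\<lambda>i. (i, i + m)) ` S"
    then obtain i where i: "i \<in> S" "e = (i, i + m)" by auto
    then have im: "i < m" using S_sub by auto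
    then have "\<Phi> i (i + m) = 1" using PhiE[of i "i+m"] n2 i by (simp add: Phi0_def)
    then show "e \<in> C" using i im n2 by (auto simp: C_def edge_set_def)
  qed
  have cardC: "card C = k" unfolding Cimg using S_card by (subst card_image) (auto simp: inj_on_def)
  have edgesum: "(\<Sum>(i, j) \<in> edge_set n \<Phi>. sqrt (\<Phi> i j) * vnorm p (\<lambda>l. U i l - U j l)) = real k * V"
  proof -
    have "(\<Sum>(i, j) \<in> edge_set n \<Phi>. sqrt (\<Phi> i j) * vnorm p (\<lambda>l. U i l - U j l))
        = (\<Sum>e \<in> edge_set n \<Phi>. if e \<in> C then V else 0)"
    proof (intro sum.cong refl)
      fix e assume e: "e \<in> edge_set n \<Phi>"
      obtain i j where ij: "e = (i,j)" by (cases e)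
      have ijn: "i < j" "j < n" "\<Phi> i j \<noteq> 0" using e ij by (auto simp: edge_set_def)
      have ijn2: "i < n" using ijn by simp
      have P1: "\<Phi> i j = 1" using H01 ijn(2,3) ijn2 by blast
      have Pz: "Phi0 i j \<noteq> 0" using PhiE[OF ijn2 ijn(2)] ijn by simp
      show "(case e of (i, j) \<Rightarrow> sqrt (\<Phi> i j) * vnorm p (\<lambda>l. U i l - U j l)) = (if e \<in> C then V else 0)"
      proof (cases "j = i + m")
        case True
        then have "i < m" using ijn n2 by simp
        then have "vnorm p (\<lambda>l. U i l - U j l) = V"
          unfolding V_def vnorm_def using U1 U2 True n2 ijn by (intro arg_cong[where f=sqrt] sum.cong) auto
        then show ?thesis using True e ij P1 by (simp add: C_def)
      next
        case False
        then have "(i < m) = (j < m)" using cls[of "(i,j)"] ijn Pz by auto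
        then have "\<forall>l<p. U i l = U j l" using half[OF ijn2 ijn(2)] by simp
        then have "vnorm p (\<lambda>l. U i l - U j l) = 0" by (simp add: vnorm_def)
        then show ?thesis using False e ij by (simp add: C_def)
      qed
    qed
    also have "\<dots> = real (card C) * V"
    proof -
      have "C \<subseteq> edge_set n \<Phi>" by (auto simp: C_def)
      moreover have "finite (edge_set n \<Phi>)"
        by (rule finite_subset[of _ "{..<n} \<times> {..<n}"]) (auto simp: edge_set_def)
      ultimately show ?thesis by (simp add: sum.If_cases Int_absorb1)
    qed
    finally show ?thesis using cardC by simp
  qed

  define N where "N = real (n * p)"
  have N6: "N \<ge> 6"
  proof -
    have "n * 1 \<le> n * p" using p1 by (intro mult_le_mono2)
    then have "6 \<le> n * p" using n2 m3 by linarith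
    then show ?thesis unfolding N_def by linarith
  qed
  have lnN: "ln N > 0" using N6 by simp
  have k0: "real k > 0" using k1 by simp
  define \<beta> where "\<beta> = (sqrt (2 / real n) + 8 * real k / (real n)^2) * real n / real k"
  define s where "s = sqrt (ln N) * \<beta>"
  have \<beta>eq: "\<beta> = sqrt (2 / real n) * real n / real k + 8 / real n"
    unfolding \<beta>_def using k0 n0 by (simp add: field_simps power2_eq_square)
  have \<beta>0: "\<beta> > 0" unfolding \<beta>eq using k0 n0 by (intro add_pos_pos divide_pos_pos mult_pos_pos) auto
  have s0: "s > 0" unfolding s_def using lnN \<beta>0 by simp
  have \<beta>sq: "\<beta>^2 \<ge> Bsq"
  proof -
    have a0: "sqrt (2 / real n) * real n / real k \<ge> 0" using n0 k0 by simp
    have b0: "8 / real n \<ge> 0" by simp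
    have "(sqrt (2 / real n) * real n / real k)^2 = 2 * real n / (real k)^2"
      using n0 k0 by (simp add: power_divide power_mult_distrib power2_eq_square[of "real n"] field_simps)
    also have "\<dots> = 4 * real m / (real k)^2" using n2 by simp
    finally have e1: "(sqrt (2 / real n) * real n / real k)^2 = 4 * real m / (real k)^2" .
    have e2: "(8 / real n)^2 = 16 / (real m)^2" using n2 by (simp add: power_divide power2_eq_square)
    have "\<beta>^2 = (sqrt (2 / real n) * real n / real k)^2 + (8 / real n)^2 + 2 * (sqrt (2 / real n) * real n / real k) * (8 / real n)"
      unfolding \<beta>eq by (simp add: power2_eq_square algebra_simps)
    moreover have "2 * (sqrt (2 / real n) * real n / real k) * (8 / real n) \<ge> 0" using a0 b0 by simp
    ultimately show ?thesis using e1 e2 by linarith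
  qed
  have Bpos: "Bsq > 0" using k0 m0 by (intro add_pos_pos) auto
  have ssq: "s^2 \<ge> ln N * Bsq"
  proof -
    have "s^2 = ln N * \<beta>^2" unfolding s_def using lnN by (simp add: power_mult_distrib)
    then show ?thesis using \<beta>sq lnN by (simp add: mult_left_mono)
  qed
  define fb where "fb c = (if snd (es!c) = fst (es!c) + m then 2 / N^2 else 2 / N^3)" for c
  define Bad where "Bad cl = {\<omega> \<in> space M. \<sigma> * s < \<bar>Y (fst cl) (snd cl) \<omega>\<bar>}" for cl
  have Ym[measurable]: "Y c l \<in> borel_measurable M" if "l < p" for c l
    unfolding Y_def using that by (intro borel_measurable_sum borel_measurable_times borel_measurable_const) (auto intro: Em)
  have Bad_sets: "Bad cl \<in> sets M" if "cl \<in> {..<L} \<times> {..<p}" for cl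
    using that Ym[of "snd cl" "fst cl"] unfolding Bad_def by auto
  have expN: "exp (- (real j * ln N)) = 1 / N^j" for j :: nat
  proof -
    have "exp (real j * ln N) = N^j" using N6 by (simp add: exp_of_nat_mult)
    then show ?thesis by (simp add: exp_minus inverse_eq_divide)
  qed
  have badb: "P.prob (Bad (c,l)) \<le> fb c" if cl: "c < L" "l < p" for c l
  proof -
    let ?a = "fst (es!c)" and ?b = "snd (es!c)"
    define r where "r i = PP ?a i - PP ?b i" for i
    have "\<exists>\<rho>. (\<Sum>i\<in>{..<n}. (r i)^2) \<le> \<rho> \<and> \<rho> > 0 \<and> 2 * exp (- (s^2) / (4 * \<rho>)) \<le> fb c"
    proof (cases "?b = ?a + m")
      case True
      then have aS: "?a \<in> S" "?a < m" using cls[of "es!c"] esn[OF cl(1)] by auto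
      have "8 * (\<Sum>i<2*m. (PP ?a i - PP (?a + m) i)^2) \<le> Bsq" by (rule rho_cross[OF aS(2) aS(1)])
      then have r1: "(\<Sum>i\<in>{..<n}. (r i)^2) \<le> Bsq / 8" using True n2 by (simp add: r_def)
      have "- (s^2) / (4 * (Bsq / 8)) \<le> - (real 2 * ln N)"
      proof -
        have q: "ln N \<le> s^2 / Bsq" using ssq Bpos by (simp add: le_divide_eq mult.commute)
        have gen: "\<And>x B :: real. B \<noteq> 0 \<Longrightarrow> - x / (4 * (B / 8)) = - (real 2 * (x / B))"
          by (simp add: field_simps)
        have "- (s^2) / (4 * (Bsq / 8)) = - (real 2 * (s^2 / Bsq))" using Bpos by (intro gen) simp
        then show ?thesis using q by simp
      qed
      then have "exp (- (s^2) / (4 * (Bsq / 8))) \<le> 1 / N^2" using expN[of 2] by (metis exp_le_cancel_iff)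
      then have "2 * exp (- (s^2) / (4 * (Bsq / 8))) \<le> fb c" using True by (simp add: fb_def)
      then show ?thesis using r1 Bpos by (intro exI[of _ "Bsq / 8"]) auto
    next
      case False
      then have w: "(?a < m) = (?b < m)" "?a \<noteq> ?b" using cls[of "es!c"] esn[OF cl(1)] by auto
      have "12 * (\<Sum>i<2*m. (PP ?a i - PP ?b i)^2) \<le> Bsq"
        using esn[OF cl(1)] n2 w by (intro rho_within) auto
      then have r1: "(\<Sum>i\<in>{..<n}. (r i)^2) \<le> Bsq / 12" using n2 by (simp add: r_def)
      have "- (s^2) / (4 * (Bsq / 12)) \<le> - (real 3 * ln N)"
      proof -
        have q: "ln N \<le> s^2 / Bsq" using ssq Bpos by (simp add: le_divide_eq mult.commute)
        have gen: "\<And>x B :: real. B \<noteq> 0 \<Longrightarrow> - x / (4 * (B / 12)) = - (real 3 * (x / B))"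
          by (simp add: field_simps)
        have "- (s^2) / (4 * (Bsq / 12)) = - (real 3 * (s^2 / Bsq))" using Bpos by (intro gen) simp
        then show ?thesis using q by simp
      qed
      then have "exp (- (s^2) / (4 * (Bsq / 12))) \<le> 1 / N^3" using expN[of 3] by (metis exp_le_cancel_iff)
      then have "2 * exp (- (s^2) / (4 * (Bsq / 12))) \<le> fb c" using False by (simp add: fb_def)
      then show ?thesis using r1 Bpos by (intro exI[of _ "Bsq / 12"]) auto
    qed
    then obtain \<rho> where rho: "(\<Sum>i\<in>{..<n}. (r i)^2) \<le> \<rho>" "\<rho> > 0" "2 * exp (- (s^2) / (4 * \<rho>)) \<le> fb c"
      by blast
    have Yr: "Y c l \<omega> = (\<Sum>i\<in>{..<n}. r i * E \<omega> i l)" for \<omega> by (simp add: Y_def r_def)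
    have "measure M {\<omega> \<in> space M. \<sigma> * s < \<bar>Y c l \<omega>\<bar>} \<le> 2 * exp (- (s^2) / (4 * \<rho>))"
    proof (rule tail_limit[OF P Ym[OF cl(2)] s0])
      fix K assume K: "K > \<sigma>"
      then have K0: "K > 0" using sig0 by simp
      have eq: "(K * s)^2 / (4 * K^2 * \<rho>) = s^2 / (4 * \<rho>)" using K0 rho(2) by (simp add: power_mult_distrib field_simps)
      have "measure M {\<omega> \<in> space M. K * s \<le> \<bar>\<Sum>i\<in>{..<n}. r i * E \<omega> i l\<bar>} \<le> 2 * exp (- ((K * s)^2) / (4 * K^2 * \<rho>))"
        by (rule sum_tail_abs[OF P _ indl[OF cl(2)] _ K0 rho(1) rho(2)])
           (use mean0 Kc cl K s0 K0 in \<open>auto\<close>)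
      then show "measure M {\<omega> \<in> space M. K * s \<le> \<bar>Y c l \<omega>\<bar>} \<le> 2 * exp (- (s^2) / (4 * \<rho>))"
        unfolding Yr using eq by simp
    qed
    then show ?thesis using rho(3) unfolding Bad_def by simp
  qed

  have p0: "real p > 0" using p1 by simp
  have Aeq: "pseudo_inverse (incidence_mat n \<Phi>) * mat n p (\<lambda>(i,l). E \<omega> i l) = A \<omega>" for \<omega>
    by (simp add: A_def pinv)
  define w where "w = real k * V / (real n * sqrt (real p))"
  have w0: "w > 0" unfolding w_def using k0 V0 n0 p0 by simp
  have rhs_eq: "\<sigma> * sqrt (ln (real (n * p)) / real p) * (sqrt (2 / real n) + 8 * real k / (real n)\<^sup>2)
        * vnorm p (\<lambda>l. c1 l - c2 l) = (\<sigma> * s) * w"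
    unfolding w_def s_def \<beta>_def N_def[symmetric] V_def[symmetric] real_sqrt_divide
    using k0 n0 p0 by (simp add: field_simps)
  have sig_s: "\<sigma> * s \<ge> 0" using sig0 s0 by simp
  define Ub where "Ub = (\<Union>cl\<in>{..<L} \<times> {..<p}. Bad cl)"
  have evt: "{\<omega> \<in> space M.
      max_norm (pseudo_inverse (incidence_mat n \<Phi>) * mat n p (\<lambda>(i, l). E \<omega> i l))
        / (real n * sqrt (real p))
        * (\<Sum>(i, j) \<in> edge_set n \<Phi>. sqrt (\<Phi> i j) * vnorm p (\<lambda>l. U i l - U j l))
      \<le> \<sigma> * sqrt (ln (real (n * p)) / real p)
        * (sqrt (2 / real n) + 8 * real k / (real n)\<^sup>2)
        * vnorm p (\<lambda>l. c1 l - c2 l)} = space M - Ub"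
  proof -
    have "(max_norm (A \<omega>) / (real n * sqrt (real p)) * (real k * V) \<le> (\<sigma> * s) * w)
          \<longleftrightarrow> (\<forall>c<L. \<forall>l<p. \<bar>Y c l \<omega>\<bar> \<le> \<sigma> * s)" for \<omega>
    proof -
      have "max_norm (A \<omega>) / (real n * sqrt (real p)) * (real k * V) = max_norm (A \<omega>) * w"
        by (simp add: w_def)
      then have "(max_norm (A \<omega>) / (real n * sqrt (real p)) * (real k * V) \<le> (\<sigma> * s) * w)
          \<longleftrightarrow> max_norm (A \<omega>) \<le> \<sigma> * s" using w0 by simp
      also have "\<dots> \<longleftrightarrow> (\<forall>c<L. \<forall>l<p. \<bar>Y c l \<omega>\<bar> \<le> \<sigma> * s)"
        using max_norm_le_iff[OF sig_s, of "A \<omega>"] by (simp add: dimA entry)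
      finally show ?thesis .
    qed
    then show ?thesis unfolding Aeq edgesum rhs_eq Ub_def Bad_def by (auto simp: not_le) (meson leD)
  qed
  have Uev: "Ub \<in> sets M" unfolding Ub_def using Bad_sets by auto
  have "P.prob Ub \<le> (\<Sum>cl\<in>{..<L} \<times> {..<p}. P.prob (Bad cl))"
    unfolding Ub_def by (rule P.finite_measure_subadditive_finite) (use Bad_sets in auto)
  also have "\<dots> \<le> (\<Sum>cl\<in>{..<L} \<times> {..<p}. fb (fst cl))"
    by (intro sum_mono) (use badb in auto)
  also have "\<dots> = real p * (\<Sum>c<L. fb c)"
  proof -
    have "(\<Sum>c<L. \<Sum>l<p. fb c) = (\<Sum>(c,l)\<in>{..<L} \<times> {..<p}. fb c)" by (rule sum.Sigma) auto
    also have "\<dots> = (\<Sum>cl\<in>{..<L} \<times> {..<p}. fb (fst cl))" by (simp add: case_prod_beta')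
    finally have "(\<Sum>cl\<in>{..<L} \<times> {..<p}. fb (fst cl)) = (\<Sum>c<L. \<Sum>l<p. fb c)" by simp
    also have "\<dots> = real p * (\<Sum>c<L. fb c)" by (simp add: sum_distrib_left)
    finally show ?thesis .
  qed
  also have "(\<Sum>c<L. fb c) = (\<Sum>e\<in>edge_set n \<Phi>. if snd e = fst e + m then 2 / N^2 else 2 / N^3)"
    using sum_edge_list[of "\<lambda>e. if snd e = fst e + m then 2 / N^2 else 2 / N^3" n \<Phi>]
    by (simp add: fb_def L_def es_def lessThan_atLeast0)
  also have "\<dots> \<le> (\<Sum>e\<in>edge_set n \<Phi>. (if e \<in> C then 2 / N^2 else 0) + 2 / N^3)"
    by (intro sum_mono) (use N6 in \<open>auto simp: C_def\<close>)
  also have "\<dots> = real k * (2 / N^2) + real (card (edge_set n \<Phi>)) * (2 / N^3)"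
  proof -
    have fE: "finite (edge_set n \<Phi>)"
      by (rule finite_subset[of _ "{..<n} \<times> {..<n}"]) (auto simp: edge_set_def)
    have "C \<subseteq> edge_set n \<Phi>" by (auto simp: C_def)
    then show ?thesis using fE cardC by (simp add: sum.distrib sum.If_cases Int_absorb1)
  qed
  finally have PU: "P.prob Ub \<le> real p * (real k * (2 / N^2) + real (card (edge_set n \<Phi>)) * (2 / N^3))"
    using p0 by simp
  have fin: "real p * (real k * (2 / N^2) + real (card (edge_set n \<Phi>)) * (2 / N^3)) \<le> 2 / (real n * real p)"
  proof -
    have Nnp: "N = real n * real p" by (simp add: N_def)
    have k2: "2 * real k \<le> real n" using km n2 by simp
    have cE: "2 * real (card (edge_set n \<Phi>)) \<le> real n * real n"
      using card_edge_set[of n \<Phi>] by (simp flip: of_nat_mult)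
    have t1: "real p * (real k * (2 / N^2)) \<le> 1 / (real n * real p)"
    proof -
      have "real p * (real k * (2 / N^2)) = (2 * real k) / (real n * real n * real p)"
        unfolding Nnp using n0 p0 by (simp add: field_simps power2_eq_square)
      also have "\<dots> \<le> real n / (real n * real n * real p)"
        using k2 n0 p0 by (intro divide_right_mono) auto
      also have "\<dots> = 1 / (real n * real p)" using n0 p0 by (simp add: field_simps)
      finally show ?thesis .
    qed
    have t2: "real p * (real (card (edge_set n \<Phi>)) * (2 / N^3)) \<le> 1 / (real n * real p)"
    proof -
      have "real p * (real (card (edge_set n \<Phi>)) * (2 / N^3))
          = (2 * real (card (edge_set n \<Phi>))) / (real n * real n * real n * real p * real p)"
        unfolding Nnp using n0 p0 by (simp add: field_simps power3_eq_cube)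
      also have "\<dots> \<le> (real n * real n) / (real n * real n * real n * real p * real p)"
        using cE n0 p0 by (intro divide_right_mono) auto
      also have "\<dots> = 1 / (real n * real p * real p)" using n0 p0 by (simp add: field_simps)
      also have "\<dots> \<le> 1 / (real n * real p)"
        using n0 p0 p1 by (intro divide_left_mono mult_mono) (auto simp: mult_le_cancel_left1)
      finally show ?thesis .
    qed
    have "real p * (real k * (2 / N^2) + real (card (edge_set n \<Phi>)) * (2 / N^3))
        = real p * (real k * (2 / N^2)) + real p * (real (card (edge_set n \<Phi>)) * (2 / N^3))"
      by (simp add: algebra_simps)
    also have "\<dots> \<le> 1 / (real n * real p) + 1 / (real n * real p)" using t1 t2 by linarith
    finally show ?thesis by simp
  qed
  have "P.prob (space M - Ub) = 1 - P.prob Ub" by (rule P.prob_compl[OF Uev])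
  then show ?thesis unfolding evt using PU fin by linarith
qed

end

theorem corollary3p4:
  fixes M :: "'a measure" and n p k :: nat and \<sigma> :: real
    and E :: "'a \<Rightarrow> nat \<Rightarrow> nat \<Rightarrow> real"
    and U :: "nat \<Rightarrow> nat \<Rightarrow> real" and c1 c2 :: "nat \<Rightarrow> real"
    and S :: "nat set" and \<Phi> :: "nat \<Rightarrow> nat \<Rightarrow> real"
  assumes "prob_space M"
    and "even n" and "n \<ge> 6" and "p \<ge> 1"
    and U1: "\<forall>i < n div 2. \<forall>l < p. U i l = c1 l"
    and U2: "\<forall>i. n div 2 \<le> i \<and> i < n \<longrightarrow> (\<forall>l < p. U i l = c2 l)"
    and indep: "prob_space.indep_vars M (\<lambda>_. PiM {..<p} (\<lambda>_. borel))
                  (\<lambda>i \<omega>. restrict (E \<omega> i) {..<p}) {..<n}"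
    and mean0: "\<forall>i < n. \<forall>l < p. integrable M (\<lambda>\<omega>. E \<omega> i l) \<and>
                  prob_space.expectation M (\<lambda>\<omega>. E \<omega> i l) = 0"
    and subg: "\<forall>i < n. subgaussian_norm M p (\<lambda>\<omega>. E \<omega> i) = ereal \<sigma>"
    and S: "S \<subseteq> {..<n div 2}" "card S = k" "1 \<le> k" "k \<le> n div 2"
    and Phi: "\<forall>i < n. \<forall>j < n. \<Phi> i j =
       (if i \<noteq> j \<and> ((\<forall>l < p. U i l = U j l)
             \<or> (i \<in> S \<and> j = i + n div 2) \<or> (j \<in> S \<and> i = j + n div 2))
        then 1 else 0)"
  shows "prob_space.prob M {\<omega> \<in> space M.
      max_norm (pseudo_inverse (incidence_mat n \<Phi>) * mat n p (\<lambda>(i, l). E \<omega> i l))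
        / (real n * sqrt (real p))
        * (\<Sum>(i, j) \<in> edge_set n \<Phi>. sqrt (\<Phi> i j) * vnorm p (\<lambda>l. U i l - U j l))
      \<le> \<sigma> * sqrt (ln (real (n * p)) / real p)
        * (sqrt (2 / real n) + 8 * real k / (real n)\<^sup>2)
        * vnorm p (\<lambda>l. c1 l - c2 l)}
    \<ge> 1 - 2 / (real n * real p)"
proof -
  note P = assms(1)
  interpret P: prob_space M by (rule P)
  define m where "m = n div 2"
  have n2: "n = 2*m" using \<open>even n\<close> by (simp add: m_def)
  have m3: "3 \<le> m" using \<open>n \<ge> 6\<close> n2 by simp
  interpret T: twoclust m k S using S m3 by unfold_locales (auto simp: m_def)
  show ?thesis
  proof (cases "\<forall>l<p. c1 l = c2 l")
    case False
    then obtain l0 where l0: "l0 < p" "c1 l0 \<noteq> c2 l0" by auto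
    have U1': "\<forall>i < m. \<forall>l < p. U i l = c1 l" using U1 by (simp add: m_def)
    have U2': "\<forall>i. m \<le> i \<and> i < n \<longrightarrow> (\<forall>l < p. U i l = c2 l)" using U2 by (simp add: m_def)
    have Phi': "\<forall>i < n. \<forall>j < n. \<Phi> i j =
       (if i \<noteq> j \<and> ((\<forall>l < p. U i l = U j l)
             \<or> (i \<in> S \<and> j = i + m) \<or> (j \<in> S \<and> i = j + m))
        then 1 else 0)" using Phi by (simp add: m_def)
    show ?thesis by (rule T.caseB[OF P n2 \<open>p \<ge> 1\<close> U1' U2' indep mean0 subg Phi' l0])
  next
    case True
    have n0: "0 < n" using n2 m3 by simp
    have sig0: "\<sigma> \<ge> 0" using subg_K(2)[of M p "\<lambda>\<omega>. E \<omega> 0" \<sigma> 0 "\<sigma> + 1"] subg n0 \<open>p \<ge> 1\<close> by auto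
    have sum0: "(\<Sum>(i, j) \<in> edge_set n \<Phi>. sqrt (\<Phi> i j) * vnorm p (\<lambda>l. U i l - U j l)) = 0"
    proof (intro sum.neutral ballI)
      fix e assume e: "e \<in> edge_set n \<Phi>"
      obtain i j where ij: "e = (i,j)" by (cases e)
      have ijn: "i < n" "j < n" using e ij by (auto simp: edge_set_def)
      have "\<forall>l<p. U i l = U j l"
      proof (intro allI impI)
        fix l assume l: "l < p"
        have "U i l = c1 l" using U1 U2 True ijn l by (cases "i < n div 2") auto
        moreover have "U j l = c1 l" using U1 U2 True ijn l by (cases "j < n div 2") auto
        ultimately show "U i l = U j l" by simp
      qed
      then have "vnorm p (\<lambda>l. U i l - U j l) = 0" by (simp add: vnorm_def)
      then show "(case e of (i, j) \<Rightarrow> sqrt (\<Phi> i j) * vnorm p (\<lambda>l. U i l - U j l)) = 0" by (simp add: ij)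
    qed
    have rhs0: "0 \<le> \<sigma> * sqrt (ln (real (n * p)) / real p)
        * (sqrt (2 / real n) + 8 * real k / (real n)\<^sup>2) * vnorm p (\<lambda>l. c1 l - c2 l)"
    proof -
      have n1: "1 \<le> real n" "1 \<le> real p" using n0 \<open>p \<ge> 1\<close> by auto
      have "1 * 1 \<le> real n * real p" using n1 by (intro mult_mono) auto
      then have np1: "1 \<le> real n * real p" by simp
      have a: "0 \<le> sqrt (ln (real (n * p)) / real p)" using np1 by simp
      have b: "0 \<le> vnorm p (\<lambda>l. c1 l - c2 l)" by (simp add: vnorm_def sum_nonneg)
      show ?thesis using sig0 a b by (intro mult_nonneg_nonneg add_nonneg_nonneg) auto
    qed
    have "{\<omega> \<in> space M.
      max_norm (pseudo_inverse (incidence_mat n \<Phi>) * mat n p (\<lambda>(i, l). E \<omega> i l))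
        / (real n * sqrt (real p))
        * (\<Sum>(i, j) \<in> edge_set n \<Phi>. sqrt (\<Phi> i j) * vnorm p (\<lambda>l. U i l - U j l))
      \<le> \<sigma> * sqrt (ln (real (n * p)) / real p)
        * (sqrt (2 / real n) + 8 * real k / (real n)\<^sup>2)
        * vnorm p (\<lambda>l. c1 l - c2 l)} = space M"
      using rhs0 unfolding sum0 by auto
    moreover have "1 - 2 / (real n * real p) \<le> 1" using n0 \<open>p \<ge> 1\<close> by simp
    ultimately show ?thesis using P.prob_space by simp
  qed
qed

end
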